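(* A positive word $A$ in the band generators represents a canonical factor (i.e. $e\le A\le\delta$) if and only if $A$ contains no obstructing pair, i.e. $A$ has no decomposition $A=BaCbD$ with $B,C,D$ positive words (possibly empty), $a,b$ band generators and $(a,b)$ an obstructing pair.
   Context: $B_n$ is the $n$-string braid group with band generators $a_{ts}=(\sigma_{t-1}\cdots\sigma_{s+1})\sigma_s(\sigma_{s+1}^{-1}\cdots\sigma_{t-1}^{-1})$, $n\ge t>s\ge1$; $e$ is the identity. $\delta=a_{n(n-1)}\cdots a_{21}$. For $V,W\in B_n$, $V\le W$ means $W=P_1VP_2$ with $P_1,P_2$ represented by positive words. An ordered pair $(a,b)$ of band generators is an obstructing pair if, for some integers $n\ge t>s>r>q\ge1$, it is one of: (1) $(a_{tr},a_{sq})$; (2) $(a_{sq},a_{tr})$; (3) $(a_{sr},a_{ts})$; (4) $(a_{ts},a_{tr})$; (5) $(a_{tr},a_{sr})$; (6) $(a_{ts},a_{ts})$. *)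

theory Defs
  imports Main
begin

text \<open>Words in the Artin generators: a letter (i, True) is sigma_i, (i, False) is sigma_i^-1.\<close>
type_synonym art_word = "(nat \<times> bool) list"

inductive braid_eq :: "nat \<Rightarrow> art_word \<Rightarrow> art_word \<Rightarrow> bool" for n where
  refl: "braid_eq n u u"
| sym: "braid_eq n u v \<Longrightarrow> braid_eq n v u"
| trans: "braid_eq n u v \<Longrightarrow> braid_eq n v w \<Longrightarrow> braid_eq n u w"
| cong: "braid_eq n u v \<Longrightarrow> braid_eq n (x @ u @ y) (x @ v @ y)"
| cancel: "1 \<le> i \<Longrightarrow> i < n \<Longrightarrow> braid_eq n [(i, b), (i, \<not> b)] []"
| comm: "1 \<le> i \<Longrightarrow> i < n \<Longrightarrow> 1 \<le> j \<Longrightarrow> j < n \<Longrightarrow> i + 2 \<le> j \<Longrightarrow>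
          braid_eq n [(i, True), (j, True)] [(j, True), (i, True)]"
| braid: "1 \<le> i \<Longrightarrow> i + 1 < n \<Longrightarrow>
          braid_eq n [(i, True), (i+1, True), (i, True)] [(i+1, True), (i, True), (i+1, True)]"

text \<open>Band generator a_{ts} = (sigma_{t-1} ... sigma_{s+1}) sigma_s (sigma_{s+1}^-1 ... sigma_{t-1}^-1).\<close>
definition band_word :: "nat \<Rightarrow> nat \<Rightarrow> art_word" where
  "band_word t s = map (\<lambda>i. (i, True)) (rev [s+1..<t]) @ [(s, True)] @ map (\<lambda>i. (i, False)) [s+1..<t]"

definition band_gens :: "nat \<Rightarrow> (nat \<times> nat) set" where
  "band_gens n = {(t, s). 1 \<le> s \<and> s < t \<and> t \<le> n}"

definition positive_word :: "nat \<Rightarrow> (nat \<times> nat) list \<Rightarrow> bool" where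
  "positive_word n P \<longleftrightarrow> set P \<subseteq> band_gens n"

definition eval_band :: "(nat \<times> nat) list \<Rightarrow> art_word" where
  "eval_band P = concat (map (\<lambda>(t, s). band_word t s) P)"

definition delta :: "nat \<Rightarrow> (nat \<times> nat) list" where
  "delta n = map (\<lambda>k. (k + 1, k)) (rev [1..<n])"

definition braid_le :: "nat \<Rightarrow> art_word \<Rightarrow> art_word \<Rightarrow> bool" where
  "braid_le n V W \<longleftrightarrow>
     (\<exists>P1 P2. positive_word n P1 \<and> positive_word n P2 \<and> braid_eq n W (eval_band P1 @ V @ eval_band P2))"

definition canonical_factor :: "nat \<Rightarrow> (nat \<times> nat) list \<Rightarrow> bool" where
  "canonical_factor n A \<longleftrightarrow> braid_le n [] (eval_band A) \<and> braid_le n (eval_band A) (eval_band (delta n))"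

text \<open>Obstructing pairs; each case only requires the indices it mentions.\<close>
definition obstructing :: "nat \<Rightarrow> nat \<times> nat \<Rightarrow> nat \<times> nat \<Rightarrow> bool" where
  "obstructing n a b \<longleftrightarrow>
     (\<exists>t s r q. n \<ge> t \<and> t > s \<and> s > r \<and> r > q \<and> q \<ge> 1 \<and>
        ((a, b) = ((t, r), (s, q)) \<or> (a, b) = ((s, q), (t, r)))) \<or>
     (\<exists>t s r. n \<ge> t \<and> t > s \<and> s > r \<and> r \<ge> 1 \<and>
        ((a, b) = ((s, r), (t, s)) \<or> (a, b) = ((t, s), (t, r)) \<or> (a, b) = ((t, r), (s, r)))) \<or>
     (\<exists>t s. n \<ge> t \<and> t > s \<and> s \<ge> 1 \<and> (a, b) = ((t, s), (t, s)))"

end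

theory Submission
  imports Defs
begin

lemmas beq_trans[trans] = braid_eq.trans

lemma beq_ctx: "braid_eq n u v \<Longrightarrow> a = x @ u @ y \<Longrightarrow> b = x @ v @ y \<Longrightarrow> braid_eq n a b"
  using braid_eq.cong by blast

lemma beq_app: "braid_eq n u u' \<Longrightarrow> braid_eq n v v' \<Longrightarrow> braid_eq n (u @ v) (u' @ v')"
proof -
  assume a: "braid_eq n u u'" and b: "braid_eq n v v'"
  have "braid_eq n (u @ v) (u' @ v)" using braid_eq.cong[OF a, of "[]" v] by simp
  also have "braid_eq n (u' @ v) (u' @ v')" using braid_eq.cong[OF b, of u' "[]"] by simp
  finally show ?thesis .
qed

lemma beq_sym: "braid_eq n u v \<Longrightarrow> braid_eq n v u" by (rule braid_eq.sym)

definition winv :: "art_word \<Rightarrow> art_word" where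
  "winv w = rev (map (\<lambda>(i,b). (i, \<not> b)) w)"

lemma inv_simps[simp]: "winv [] = []" "winv (x # w) = winv w @ [(fst x, \<not> snd x)]"
  "winv (u @ v) = winv v @ winv u"
  by (auto simp: winv_def split: prod.splits)

definition ok :: "nat \<Rightarrow> art_word \<Rightarrow> bool" where
  "ok n w \<longleftrightarrow> (\<forall>x\<in>set w. 1 \<le> fst x \<and> fst x < n)"

lemma ok_simps[simp]: "ok n []" "ok n (x # w) \<longleftrightarrow> 1 \<le> fst x \<and> fst x < n \<and> ok n w"
  "ok n (u @ v) \<longleftrightarrow> ok n u \<and> ok n v"
  by (auto simp: ok_def)

lemma cancel2: "1 \<le> i \<Longrightarrow> i < n \<Longrightarrow> braid_eq n (x @ [(i,b),(i,\<not> b)] @ y) (x @ y)"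
  using braid_eq.cong[OF braid_eq.cancel[of i n b], of x y] by simp

lemma cancel2': "1 \<le> i \<Longrightarrow> i < n \<Longrightarrow> braid_eq n (x @ [(i,\<not> b),(i,b)] @ y) (x @ y)"
  using cancel2[of i n x "\<not> b" y] by simp

lemma w_inv: "ok n w \<Longrightarrow> braid_eq n (x @ w @ winv w @ y) (x @ y)"
proof (induction w arbitrary: x y)
  case Nil then show ?case by (simp add: braid_eq.refl)
next
  case (Cons a w)
  obtain i b where ab: "a = (i,b)" by (cases a)
  have "braid_eq n (x @ (a # w) @ winv (a # w) @ y) ((x @ [a]) @ w @ winv w @ ([(i, \<not> b)] @ y))"
    by (simp add: ab braid_eq.refl)
  also have "braid_eq n \<dots> ((x @ [a]) @ ([(i, \<not> b)] @ y))" using Cons.IH[of "x @ [a]" "[(i, \<not> b)] @ y"] Cons.prems by simp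
  also have "braid_eq n \<dots> (x @ y)" using cancel2[of i n x b y] Cons.prems ab by simp
  finally show ?case .
qed

lemma inv_inv[simp]: "winv (winv w) = w" by (induction w) auto
lemma ok_inv[simp]: "ok n (winv w) = ok n w" by (induction w) auto

lemma inv_w: "ok n w \<Longrightarrow> braid_eq n (x @ winv w @ w @ y) (x @ y)"
  using w_inv[of n "winv w" x y] by simp

lemma mul_right: "ok n v \<Longrightarrow> braid_eq n (u @ v) w \<Longrightarrow> braid_eq n u (w @ winv v)"
proof -
  assume o: "ok n v" and h: "braid_eq n (u @ v) w"
  have "braid_eq n u (u @ v @ winv v @ [])" using beq_sym[OF w_inv[OF o, of u "[]"]] by simp
  also have "braid_eq n \<dots> (w @ winv v)" using beq_app[OF h braid_eq.refl[of n "winv v"]] by simp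
  finally show ?thesis .
qed

lemma mul_left: "ok n v \<Longrightarrow> braid_eq n (v @ u) w \<Longrightarrow> braid_eq n u (winv v @ w)"
proof -
  assume o: "ok n v" and h: "braid_eq n (v @ u) w"
  have "braid_eq n u ([] @ winv v @ v @ u)" using beq_sym[OF inv_w[OF o, of "[]" u]] by simp
  also have "braid_eq n \<dots> (winv v @ w)" using beq_app[OF braid_eq.refl[of n "winv v"] h] by simp
  finally show ?thesis .
qed

lemma comm_pp: "1 \<le> i \<Longrightarrow> i < n \<Longrightarrow> 1 \<le> j \<Longrightarrow> j < n \<Longrightarrow> i + 2 \<le> j \<or> j + 2 \<le> i \<Longrightarrow>
  braid_eq n [(i,True),(j,True)] [(j,True),(i,True)]"
  by (metis braid_eq.comm braid_eq.sym)

lemma comm_conj: "ok n [x] \<Longrightarrow> braid_eq n ([x] @ v) (v @ [x]) \<Longrightarrow>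
   braid_eq n (winv [x] @ v) (v @ winv [x])"
proof -
  assume o: "ok n [x]" and h: "braid_eq n ([x] @ v) (v @ [x])"
  have "braid_eq n (winv [x] @ v) (winv [x] @ v @ [x] @ winv [x] @ [])"
    using beq_sym[OF w_inv[OF o, of "winv [x] @ v" "[]"]] by simp
  also have "braid_eq n \<dots> (winv [x] @ ([x] @ v) @ winv [x])"
    using beq_ctx[OF beq_sym[OF h], of _ "winv [x]" "winv [x]"] by simp
  also have "braid_eq n \<dots> ([] @ v @ winv [x])" using inv_w[OF o, of "[]" "v @ winv [x]"] by simp
  finally show ?thesis by simp
qed

lemma comm_conj': "ok n [(i,b)] \<Longrightarrow> braid_eq n ([(i,b)] @ v) (v @ [(i,b)]) \<Longrightarrow>
   braid_eq n ([(i, \<not> b)] @ v) (v @ [(i, \<not> b)])"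
  using comm_conj[of n "(i,b)" v] by simp

lemma comm_letters: "1 \<le> i \<Longrightarrow> i < n \<Longrightarrow> 1 \<le> j \<Longrightarrow> j < n \<Longrightarrow> i + 2 \<le> j \<or> j + 2 \<le> i \<Longrightarrow>
  braid_eq n [(i,b),(j,c)] [(j,c),(i,b)]"
proof -
  assume h: "1 \<le> i" "i < n" "1 \<le> j" "j < n" "i + 2 \<le> j \<or> j + 2 \<le> i"
  have pt: "braid_eq n ([(i,b)] @ [(j,True)]) ([(j,True)] @ [(i,b)])" for b
  proof (cases b)
    case True then show ?thesis using comm_pp[OF h] by simp
  next
    case False
    have "braid_eq n ([(i,True)] @ [(j,True)]) ([(j,True)] @ [(i,True)])" using comm_pp[OF h] by simp
    from comm_conj'[OF _ this] h False show ?thesis by simp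
  qed
  have "braid_eq n ([(j,True)] @ [(i,b)]) ([(i,b)] @ [(j,True)])" using beq_sym[OF pt] .
  then have "braid_eq n ([(j,c)] @ [(i,b)]) ([(i,b)] @ [(j,c)])"
    using comm_conj'[of n j True "[(i,b)]"] h by (cases c) auto
  then show ?thesis using beq_sym by simp
qed

lemma comm_word: "(\<And>y. y \<in> set v \<Longrightarrow> braid_eq n [x, y] [y, x]) \<Longrightarrow> braid_eq n ([x] @ v) (v @ [x])"
proof (induction v)
  case Nil then show ?case by (simp add: braid_eq.refl)
next
  case (Cons y v)
  have "braid_eq n ([x] @ y # v) ([] @ [x, y] @ v)" by (simp add: braid_eq.refl)
  also have "braid_eq n \<dots> ([] @ [y, x] @ v)" using Cons.prems beq_ctx[of n "[x,y]" "[y,x]" _ "[]" v] by simp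
  also have "braid_eq n \<dots> ([y] @ ([x] @ v) @ [])" by (simp add: braid_eq.refl)
  also have "braid_eq n \<dots> ([y] @ (v @ [x]) @ [])" using beq_ctx[OF Cons.IH, of _ "[y]" "[]"] Cons.prems by simp
  finally show ?case by simp
qed

lemma comm_words: "(\<And>x. x \<in> set u \<Longrightarrow> braid_eq n ([x] @ v) (v @ [x])) \<Longrightarrow> braid_eq n (u @ v) (v @ u)"
proof (induction u)
  case Nil then show ?case by (simp add: braid_eq.refl)
next
  case (Cons x u)
  have "braid_eq n ((x # u) @ v) ([x] @ (u @ v) @ [])" by (simp add: braid_eq.refl)
  also have "braid_eq n \<dots> ([x] @ (v @ u) @ [])" using beq_ctx[OF Cons.IH, of _ "[x]" "[]"] Cons.prems by simp
  also have "braid_eq n \<dots> ([] @ ([x] @ v) @ u)" by (simp add: braid_eq.refl)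
  also have "braid_eq n \<dots> ([] @ (v @ [x]) @ u)" using Cons.prems beq_ctx[of n "[x] @ v" "v @ [x]" _ "[]" u] by simp
  finally show ?case by simp
qed


lemma bw_Suc: "s < t \<Longrightarrow> band_word (Suc t) s = [(t,True)] @ band_word t s @ [(t,False)]"
  unfolding band_word_def by (simp add: upt_Suc_append)

lemma bw_base: "band_word (Suc s) s = [(s,True)]"
  unfolding band_word_def by simp

lemma bw_set: "x \<in> set (band_word t s) \<Longrightarrow> s < t \<Longrightarrow> s \<le> fst x \<and> fst x < t"
  unfolding band_word_def by auto

lemma bw_ok: "1 \<le> s \<Longrightarrow> s < t \<Longrightarrow> t \<le> n \<Longrightarrow> ok n (band_word t s)"
  using bw_set unfolding ok_def by fastforce

lemma braid3: "1 \<le> i \<Longrightarrow> i + 1 < n \<Longrightarrow>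
  braid_eq n ([(i,True),(Suc i,True),(i,True)]) ([(Suc i,True),(i,True),(Suc i,True)])"
  using braid_eq.braid by simp

lemma far: "1 \<le> s \<Longrightarrow> s < t \<Longrightarrow> t \<le> n \<Longrightarrow> 1 \<le> j \<Longrightarrow> j < n \<Longrightarrow> j + 2 \<le> s \<or> t + 1 \<le> j \<Longrightarrow>
  braid_eq n ([(j,b)] @ band_word t s) (band_word t s @ [(j,b)])"
proof (rule comm_word)
  fix y assume a: "1 \<le> s" "s < t" "t \<le> n" "1 \<le> j" "j < n" "j + 2 \<le> s \<or> t + 1 \<le> j"
    and y: "y \<in> set (band_word t s)"
  obtain i c where yi: "y = (i,c)" by (cases y)
  have "s \<le> i \<and> i < t" using bw_set[OF y a(2)] yi by simp
  then show "braid_eq n [(j, b), y] [y, (j, b)]" unfolding yi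
    using comm_letters[of j n i b c] a by auto
qed

lemma cl: "1 \<le> i \<Longrightarrow> i < n \<Longrightarrow> 1 \<le> j \<Longrightarrow> j < n \<Longrightarrow> i + 2 \<le> j \<or> j + 2 \<le> i \<Longrightarrow>
  braid_eq n (x @ [(i,b),(j,c)] @ y) (x @ [(j,c),(i,b)] @ y)"
  using braid_eq.cong[OF comm_letters] by blast

lemma BRinv: "1 \<le> j \<Longrightarrow> j + 1 < n \<Longrightarrow>
  braid_eq n [(Suc j,True),(j,False),(Suc j,False)] [(j,False),(Suc j,False),(j,True)]"
proof -
  assume h: "1 \<le> j" "j + 1 < n"
  have o: "ok n [(Suc j,True),(j,True)]" using h by simp
  have "braid_eq n [(Suc j,True),(j,False),(Suc j,False)]
     ([] @ winv [(Suc j,True),(j,True)] @ [(Suc j,True),(j,True)] @ [(Suc j,True),(j,False),(Suc j,False)])"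
    using beq_sym[OF inv_w[OF o, of "[]" "[(Suc j,True),(j,False),(Suc j,False)]"]] by simp
  also have "braid_eq n \<dots> ([(j,False),(Suc j,False)] @ [(Suc j,True),(j,True),(Suc j,True)] @ [(j,False),(Suc j,False)])"
    by (simp add: braid_eq.refl)
  also have "braid_eq n \<dots> ([(j,False),(Suc j,False)] @ [(j,True),(Suc j,True),(j,True)] @ [(j,False),(Suc j,False)])"
    by (rule braid_eq.cong, rule beq_sym, rule braid3, use h in auto)
  also have "braid_eq n \<dots> ([(j,False),(Suc j,False),(j,True)] @ [(Suc j,True),(j,True)] @ winv [(Suc j,True),(j,True)] @ [])"
    by (simp add: braid_eq.refl)
  also have "braid_eq n \<dots> [(j,False),(Suc j,False),(j,True)]" using w_inv[OF o, of "[(j,False),(Suc j,False),(j,True)]" "[]"] by simp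
  finally show ?thesis .
qed

lemma nested_T: "1 \<le> s \<Longrightarrow> s + 1 \<le> j \<Longrightarrow> j + 2 \<le> t \<Longrightarrow> t \<le> n \<Longrightarrow>
  braid_eq n ([(j,True)] @ band_word t s) (band_word t s @ [(j,True)])"
proof -
  assume a: "1 \<le> s" "s + 1 \<le> j" "j + 2 \<le> t" "t \<le> n"
  have "j + 2 + d \<le> n \<Longrightarrow> braid_eq n ([(j,True)] @ band_word (j+2+d) s) (band_word (j+2+d) s @ [(j,True)])" for d
  proof (induction d)
    case 0
    let ?W = "band_word j s"
    have bw: "band_word (Suc (Suc j)) s = [(Suc j,True),(j,True)] @ ?W @ [(j,False),(Suc j,False)]"
      using bw_Suc[of s "Suc j"] bw_Suc[of s j] a by simp
    have "braid_eq n ([(j,True)] @ band_word (j+2+0) s) ([] @ [(j,True),(Suc j,True),(j,True)] @ ?W @ [(j,False),(Suc j,False)])"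
      using bw by (simp add: braid_eq.refl)
    also have "braid_eq n \<dots> ([] @ [(Suc j,True),(j,True),(Suc j,True)] @ ?W @ [(j,False),(Suc j,False)])"
      by (rule braid_eq.cong, rule braid3, use a 0 in auto)
    also have "braid_eq n \<dots> ([(Suc j,True),(j,True)] @ ([(Suc j,True)] @ ?W) @ [(j,False),(Suc j,False)])"
      by (simp add: braid_eq.refl)
    also have "braid_eq n \<dots> ([(Suc j,True),(j,True)] @ (?W @ [(Suc j,True)]) @ [(j,False),(Suc j,False)])"
      by (rule braid_eq.cong, rule far, use a 0 in auto)
    also have "braid_eq n \<dots> (([(Suc j,True),(j,True)] @ ?W) @ [(Suc j,True),(j,False),(Suc j,False)] @ [])"
      by (simp add: braid_eq.refl)
    also have "braid_eq n \<dots> (([(Suc j,True),(j,True)] @ ?W) @ [(j,False),(Suc j,False),(j,True)] @ [])"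
      by (rule braid_eq.cong, rule BRinv, use a 0 in auto)
    finally show ?case using bw by simp
  next
    case (Suc d)
    let ?t = "j+2+d"
    let ?B = "band_word ?t s"
    have bw: "band_word (j+2+Suc d) s = [(?t,True)] @ ?B @ [(?t,False)]"
      using bw_Suc[of s ?t] a by simp
    have "braid_eq n ([(j,True)] @ band_word (j+2+Suc d) s) ([] @ [(j,True),(?t,True)] @ ?B @ [(?t,False)])"
      using bw by (simp add: braid_eq.refl)
    also have "braid_eq n \<dots> ([] @ [(?t,True),(j,True)] @ ?B @ [(?t,False)])"
      by (rule cl, use a Suc in auto)
    also have "braid_eq n \<dots> ([(?t,True)] @ ([(j,True)] @ ?B) @ [(?t,False)])"
      by (simp add: braid_eq.refl)
    also have "braid_eq n \<dots> ([(?t,True)] @ (?B @ [(j,True)]) @ [(?t,False)])"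
      by (rule braid_eq.cong, rule Suc.IH, use Suc in auto)
    also have "braid_eq n \<dots> (([(?t,True)] @ ?B) @ [(j,True),(?t,False)] @ [])"
      by (simp add: braid_eq.refl)
    also have "braid_eq n \<dots> (([(?t,True)] @ ?B) @ [(?t,False),(j,True)] @ [])"
      by (rule cl, use a Suc in auto)
    finally show ?case using bw by simp
  qed
  note main = this
  obtain d where td: "t = j+2+d" using a(3) le_Suc_ex by blast
  have "j+2+d \<le> n" using a(4) td by simp
  from main[OF this] show ?thesis unfolding td .
qed

lemma LS: "1 \<le> s \<Longrightarrow> s < t \<Longrightarrow> t \<le> n \<Longrightarrow> 1 \<le> j \<Longrightarrow> j < n \<Longrightarrow>
  j + 2 \<le> s \<or> t + 1 \<le> j \<or> (s + 1 \<le> j \<and> j + 2 \<le> t) \<Longrightarrow>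
  braid_eq n ([(j,b)] @ band_word t s) (band_word t s @ [(j,b)])"
proof -
  assume a: "1 \<le> s" "s < t" "t \<le> n" "1 \<le> j" "j < n" "j + 2 \<le> s \<or> t + 1 \<le> j \<or> (s + 1 \<le> j \<and> j + 2 \<le> t)"
  show ?thesis
  proof (cases "j + 2 \<le> s \<or> t + 1 \<le> j")
    case True then show ?thesis using far a by blast
  next
    case False
    then have nn: "braid_eq n ([(j,True)] @ band_word t s) (band_word t s @ [(j,True)])"
      using nested_T a by auto
    show ?thesis
    proof (cases b)
      case True then show ?thesis using nn by simp
    next
      case False then show ?thesis using comm_conj'[OF _ nn] a by simp
    qed
  qed
qed

lemma R1: "1 \<le> s \<Longrightarrow> s < t \<Longrightarrow> t \<le> n \<Longrightarrow> 1 \<le> q \<Longrightarrow> q < r \<Longrightarrow> r \<le> n \<Longrightarrow>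
  t < q \<or> r < s \<or> (s < q \<and> r < t) \<or> (q < s \<and> t < r) \<Longrightarrow>
  braid_eq n (band_word t s @ band_word r q) (band_word r q @ band_word t s)"
proof -
  assume a: "1 \<le> s" "s < t" "t \<le> n" "1 \<le> q" "q < r" "r \<le> n"
    "t < q \<or> r < s \<or> (s < q \<and> r < t) \<or> (q < s \<and> t < r)"
  show ?thesis
  proof (cases "q < s \<and> t < r")
    case True
    show ?thesis
    proof (rule comm_words)
      fix x assume x: "x \<in> set (band_word t s)"
      obtain j c where xj: "x = (j,c)" by (cases x)
      have "s \<le> j \<and> j < t" using bw_set[OF x a(2)] xj by simp
      then show "braid_eq n ([x] @ band_word r q) (band_word r q @ [x])"
        unfolding xj using LS[of q r n j c] a True by auto
    qed
  next
    case False
    have "braid_eq n (band_word r q @ band_word t s) (band_word t s @ band_word r q)"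
    proof (rule comm_words)
      fix x assume x: "x \<in> set (band_word r q)"
      obtain j c where xj: "x = (j,c)" by (cases x)
      have "q \<le> j \<and> j < r" using bw_set[OF x a(5)] xj by simp
      then show "braid_eq n ([x] @ band_word t s) (band_word t s @ [x])"
        unfolding xj using LS[of s t n j c] a False by auto
    qed
    then show ?thesis by (rule beq_sym)
  qed
qed

lemma cancel_ins: "1 \<le> i \<Longrightarrow> i < n \<Longrightarrow> braid_eq n (x @ y) (x @ [(i,b),(i,\<not> b)] @ y)"
  using beq_sym[OF cancel2] by blast

lemma Cp: "1 \<le> s \<Longrightarrow> Suc (Suc s) \<le> t \<Longrightarrow> t \<le> n \<Longrightarrow>
  braid_eq n (band_word t s) ([(s,False)] @ band_word t (Suc s) @ [(s,True)])"
proof -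
  assume a: "1 \<le> s" "Suc (Suc s) \<le> t" "t \<le> n"
  have "t \<le> n \<longrightarrow> braid_eq n (band_word t s) ([(s,False)] @ band_word t (Suc s) @ [(s,True)])"
    using a(2)
  proof (induction t rule: dec_induct)
    case base
    have e1: "band_word (Suc (Suc s)) s = [(Suc s,True),(s,True),(Suc s,False)]"
      using bw_Suc[of s "Suc s"] bw_base[of s] by simp
    have e2: "band_word (Suc (Suc s)) (Suc s) = [(Suc s,True)]" using bw_base by simp
    show ?case
    proof
      assume n: "Suc (Suc s) \<le> n"
      have "braid_eq n [(Suc s,True),(s,True),(Suc s,False)] ([] @ [(s,False),(s,True)] @ [(Suc s,True),(s,True),(Suc s,False)])"
        using cancel_ins[of s n "[]" _ False] a n by simp
      also have "braid_eq n \<dots> ([(s,False)] @ [(s,True),(Suc s,True),(s,True)] @ [(Suc s,False)])" by (simp add: braid_eq.refl)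
      also have "braid_eq n \<dots> ([(s,False)] @ [(Suc s,True),(s,True),(Suc s,True)] @ [(Suc s,False)])"
        by (rule braid_eq.cong, rule braid3, use a n in auto)
      also have "braid_eq n \<dots> ([(s,False),(Suc s,True),(s,True)] @ [(Suc s,True),(Suc s,False)] @ [])" by (simp add: braid_eq.refl)
      also have "braid_eq n \<dots> ([(s,False),(Suc s,True),(s,True)] @ [])"
        using cancel2[of "Suc s" n "[(s,False),(Suc s,True),(s,True)]" True "[]"] a n by simp
      finally show "braid_eq n (band_word (Suc (Suc s)) s) ([(s, False)] @ band_word (Suc (Suc s)) (Suc s) @ [(s, True)])"
        using e1 e2 by simp
    qed
  next
    case (step m)
    show ?case
    proof
      assume n: "Suc m \<le> n"
      let ?B = "band_word m (Suc s)"
      have e1: "band_word (Suc m) s = [(m,True)] @ band_word m s @ [(m,False)]" using bw_Suc step by simp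
      have e2: "band_word (Suc m) (Suc s) = [(m,True)] @ ?B @ [(m,False)]" using bw_Suc step by simp
      have "braid_eq n (band_word (Suc m) s) ([(m,True)] @ ([(s,False)] @ ?B @ [(s,True)]) @ [(m,False)])"
        unfolding e1 by (rule braid_eq.cong, use step n in simp)
      also have "braid_eq n \<dots> ([] @ [(m,True),(s,False)] @ ?B @ [(s,True),(m,False)])" by (simp add: braid_eq.refl)
      also have "braid_eq n \<dots> ([] @ [(s,False),(m,True)] @ ?B @ [(s,True),(m,False)])"
        by (rule cl, use a step n in auto)
      also have "braid_eq n \<dots> (([(s,False),(m,True)] @ ?B) @ [(s,True),(m,False)] @ [])" by (simp add: braid_eq.refl)
      also have "braid_eq n \<dots> (([(s,False),(m,True)] @ ?B) @ [(m,False),(s,True)] @ [])"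
        by (rule cl, use a step n in auto)
      finally show "braid_eq n (band_word (Suc m) s) ([(s, False)] @ band_word (Suc m) (Suc s) @ [(s, True)])"
        using e2 by simp
    qed
  qed
  then show ?thesis using a by simp
qed


lemma BR: "1 \<le> r \<Longrightarrow> Suc (Suc r) \<le> t \<Longrightarrow> t \<le> n \<Longrightarrow>
  braid_eq n (band_word t (Suc r) @ [(r,True)] @ band_word t (Suc r)) ([(r,True)] @ band_word t (Suc r) @ [(r,True)])"
proof -
  assume a: "1 \<le> r" "Suc (Suc r) \<le> t" "t \<le> n"
  have "t \<le> n \<longrightarrow> braid_eq n (band_word t (Suc r) @ [(r,True)] @ band_word t (Suc r)) ([(r,True)] @ band_word t (Suc r) @ [(r,True)])"
    using a(2)
  proof (induction t rule: dec_induct)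
    case base
    show ?case using bw_base[of "Suc r"] beq_sym[OF braid3[of r n]] a by simp
  next
    case (step m)
    show ?case
    proof
      assume n: "Suc m \<le> n"
      let ?A = "band_word m (Suc r)"
      have e: "band_word (Suc m) (Suc r) = [(m,True)] @ ?A @ [(m,False)]" using bw_Suc step by simp
      have "braid_eq n (band_word (Suc m) (Suc r) @ [(r,True)] @ band_word (Suc m) (Suc r))
         (([(m,True)] @ ?A) @ [(m,False),(r,True)] @ ([(m,True)] @ ?A @ [(m,False)]))"
        unfolding e by (simp add: braid_eq.refl)
      also have "braid_eq n \<dots> (([(m,True)] @ ?A) @ [(r,True),(m,False)] @ ([(m,True)] @ ?A @ [(m,False)]))"
        by (rule cl, use a step n in auto)
      also have "braid_eq n \<dots> (([(m,True)] @ ?A @ [(r,True)]) @ [(m,False),(m,True)] @ (?A @ [(m,False)]))"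
        by (simp add: braid_eq.refl)
      also have "braid_eq n \<dots> (([(m,True)] @ ?A @ [(r,True)]) @ (?A @ [(m,False)]))"
        using cancel2[of m n "[(m,True)] @ ?A @ [(r,True)]" False "?A @ [(m,False)]"] a step n by simp
      also have "braid_eq n \<dots> ([(m,True)] @ (?A @ [(r,True)] @ ?A) @ [(m,False)])"
        by (simp add: braid_eq.refl)
      also have "braid_eq n \<dots> ([(m,True)] @ ([(r,True)] @ ?A @ [(r,True)]) @ [(m,False)])"
        by (rule braid_eq.cong, use step n in simp)
      also have "braid_eq n \<dots> ([] @ [(m,True),(r,True)] @ (?A @ [(r,True),(m,False)]))"
        by (simp add: braid_eq.refl)
      also have "braid_eq n \<dots> ([] @ [(r,True),(m,True)] @ (?A @ [(r,True),(m,False)]))"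
        by (rule cl, use a step n in auto)
      also have "braid_eq n \<dots> (([(r,True),(m,True)] @ ?A) @ [(r,True),(m,False)] @ [])"
        by (simp add: braid_eq.refl)
      also have "braid_eq n \<dots> (([(r,True),(m,True)] @ ?A) @ [(m,False),(r,True)] @ [])"
        by (rule cl, use a step n in auto)
      finally show "braid_eq n (band_word (Suc m) (Suc r) @ [(r, True)] @ band_word (Suc m) (Suc r))
         ([(r, True)] @ band_word (Suc m) (Suc r) @ [(r, True)])" unfolding e by simp
    qed
  qed
  then show ?thesis using a by simp
qed

lemma R2a: "1 \<le> r \<Longrightarrow> r < s \<Longrightarrow> s < t \<Longrightarrow> t \<le> n \<Longrightarrow>
  braid_eq n (band_word t s @ band_word s r) (band_word t r @ band_word t s)"
proof -
  assume a: "1 \<le> r" "r < s" "s < t" "t \<le> n"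
  have "t \<le> n \<longrightarrow> braid_eq n (band_word t s @ band_word s r) (band_word t r @ band_word t s)"
    using Suc_leI[OF a(3)]
  proof (induction t rule: dec_induct)
    case base
    show ?case
    proof
      assume n: "Suc s \<le> n"
      have "braid_eq n (([(s,True)] @ band_word s r) @ []) (([(s,True)] @ band_word s r) @ [(s,False),(s,True)] @ [])"
        using cancel_ins[of s n "[(s,True)] @ band_word s r" "[]" False] a n by simp
      then show "braid_eq n (band_word (Suc s) s @ band_word s r) (band_word (Suc s) r @ band_word (Suc s) s)"
        using bw_base[of s] bw_Suc[of r s] a by simp
    qed
  next
    case (step m)
    show ?case
    proof
      assume n: "Suc m \<le> n"
      have e1: "band_word (Suc m) s = [(m,True)] @ band_word m s @ [(m,False)]" using bw_Suc step by simp
      have e2: "band_word (Suc m) r = [(m,True)] @ band_word m r @ [(m,False)]" using bw_Suc step a by simp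
      have "braid_eq n (band_word (Suc m) s @ band_word s r)
          (([(m,True)] @ band_word m s) @ ([(m,False)] @ band_word s r) @ [])" unfolding e1 by (simp add: braid_eq.refl)
      also have "braid_eq n \<dots> (([(m,True)] @ band_word m s) @ (band_word s r @ [(m,False)]) @ [])"
        by (rule braid_eq.cong, rule LS, use a step n in auto)
      also have "braid_eq n \<dots> ([(m,True)] @ (band_word m s @ band_word s r) @ [(m,False)])"
        by (simp add: braid_eq.refl)
      also have "braid_eq n \<dots> ([(m,True)] @ (band_word m r @ band_word m s) @ [(m,False)])"
        by (rule braid_eq.cong, use step n in simp)
      also have "braid_eq n \<dots> (([(m,True)] @ band_word m r) @ [(m,False),(m,True)] @ (band_word m s @ [(m,False)]))"
        using cancel_ins[of m n "[(m,True)] @ band_word m r" "band_word m s @ [(m,False)]" False] a step n by simp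
      finally show "braid_eq n (band_word (Suc m) s @ band_word s r) (band_word (Suc m) r @ band_word (Suc m) s)"
        unfolding e1 e2 by simp
    qed
  qed
  then show ?thesis using a by simp
qed

lemma R2b0: "1 \<le> r \<Longrightarrow> r \<le> s0 \<Longrightarrow> Suc s0 < t \<Longrightarrow> t \<le> n \<Longrightarrow>
  braid_eq n (band_word t r @ band_word t (Suc s0)) (band_word (Suc s0) r @ band_word t r)"
proof -
  assume a: "1 \<le> r" "r \<le> s0" "Suc s0 < t" "t \<le> n"
  let ?A = "band_word t (Suc s0)"
  have "1 \<le> r \<longrightarrow> braid_eq n (band_word t r @ ?A) (band_word (Suc s0) r @ band_word t r)"
    using a(2)
  proof (induction r rule: inc_induct)
    case base
    show ?case
    proof
      assume r: "1 \<le> s0"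
      have cp: "braid_eq n (band_word t s0) ([(s0,False)] @ ?A @ [(s0,True)])"
        by (rule Cp, use a r in auto)
      have "braid_eq n (band_word t s0 @ ?A) (([(s0,False)] @ ?A @ [(s0,True)]) @ ?A)"
        by (rule beq_app[OF cp braid_eq.refl])
      also have "braid_eq n \<dots> ([(s0,False)] @ (?A @ [(s0,True)] @ ?A) @ [])" by (simp add: braid_eq.refl)
      also have "braid_eq n \<dots> ([(s0,False)] @ ([(s0,True)] @ ?A @ [(s0,True)]) @ [])"
        by (rule braid_eq.cong, rule BR, use a r in auto)
      also have "braid_eq n \<dots> ([] @ [(s0,False),(s0,True)] @ (?A @ [(s0,True)]))" by (simp add: braid_eq.refl)
      also have "braid_eq n \<dots> ([] @ (?A @ [(s0,True)]))"
        using cancel2[of s0 n "[]" False "?A @ [(s0,True)]"] a r by simp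
      finally have l: "braid_eq n (band_word t s0 @ ?A) (?A @ [(s0,True)])" by simp
      have "braid_eq n ([(s0,True)] @ band_word t s0) ([(s0,True)] @ ([(s0,False)] @ ?A @ [(s0,True)]))"
        by (rule beq_app[OF braid_eq.refl cp])
      also have "braid_eq n \<dots> ([] @ [(s0,True),(s0,False)] @ (?A @ [(s0,True)]))" by (simp add: braid_eq.refl)
      also have "braid_eq n \<dots> ([] @ (?A @ [(s0,True)]))"
        using cancel2[of s0 n "[]" True "?A @ [(s0,True)]"] a r by simp
      finally have rr: "braid_eq n ([(s0,True)] @ band_word t s0) (?A @ [(s0,True)])" by simp
      show "braid_eq n (band_word t s0 @ ?A) (band_word (Suc s0) s0 @ band_word t s0)"
        using braid_eq.trans[OF l beq_sym[OF rr]] bw_base[of s0] by simp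
    qed
  next
    case (step r)
    show ?case
    proof
      assume r: "1 \<le> r"
      let ?X = "band_word t (Suc r)"
      let ?Y = "band_word (Suc s0) (Suc r)"
      have c1: "braid_eq n (band_word t r) ([(r,False)] @ ?X @ [(r,True)])"
        by (rule Cp, use a r step in auto)
      have c2: "braid_eq n (band_word (Suc s0) r) ([(r,False)] @ ?Y @ [(r,True)])"
        by (rule Cp, use a r step in auto)
      have "braid_eq n (band_word t r @ ?A) (([(r,False)] @ ?X @ [(r,True)]) @ ?A)"
        by (rule beq_app[OF c1 braid_eq.refl])
      also have "braid_eq n \<dots> (([(r,False)] @ ?X) @ ([(r,True)] @ ?A) @ [])" by (simp add: braid_eq.refl)
      also have "braid_eq n \<dots> (([(r,False)] @ ?X) @ (?A @ [(r,True)]) @ [])"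
        by (rule braid_eq.cong, rule LS, use a r step in auto)
      also have "braid_eq n \<dots> ([(r,False)] @ (?X @ ?A) @ [(r,True)])" by (simp add: braid_eq.refl)
      also have "braid_eq n \<dots> ([(r,False)] @ (?Y @ ?X) @ [(r,True)])"
        by (rule braid_eq.cong, use step r in simp)
      also have "braid_eq n \<dots> (([(r,False)] @ ?Y) @ [(r,True),(r,False)] @ (?X @ [(r,True)]))"
        using cancel_ins[of r n "[(r,False)] @ ?Y" "?X @ [(r,True)]" True] a r step by simp
      also have "braid_eq n \<dots> (([(r,False)] @ ?Y @ [(r,True)]) @ ([(r,False)] @ ?X @ [(r,True)]))"
        by (simp add: braid_eq.refl)
      also have "braid_eq n \<dots> (band_word (Suc s0) r @ band_word t r)"
        by (rule beq_app[OF beq_sym[OF c2] beq_sym[OF c1]])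
      finally show "braid_eq n (band_word t r @ ?A) (band_word (Suc s0) r @ band_word t r)" .
    qed
  qed
  then show ?thesis using a by simp
qed

lemma R2b: "1 \<le> r \<Longrightarrow> r < s \<Longrightarrow> s < t \<Longrightarrow> t \<le> n \<Longrightarrow>
  braid_eq n (band_word t r @ band_word t s) (band_word s r @ band_word t r)"
  using R2b0[of r "s - 1" t n] by simp

lemma R2c: "1 \<le> r \<Longrightarrow> r < s \<Longrightarrow> s < t \<Longrightarrow> t \<le> n \<Longrightarrow>
  braid_eq n (band_word t s @ band_word s r) (band_word s r @ band_word t r)"
  using braid_eq.trans[OF R2a R2b] by blast


lemma eval_simps[simp]: "eval_band [] = []" "eval_band (x # u) = band_word (fst x) (snd x) @ eval_band u"
  "eval_band (u @ v) = eval_band u @ eval_band v"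
  by (auto simp: eval_band_def split: prod.splits)

definition dl :: "nat list \<Rightarrow> (nat \<times> nat) list" where
  "dl L = zip L (tl L)"

lemma dl_simps[simp]: "dl [] = []" "dl [x] = []" "dl (x # y # L) = (x, y) # dl (y # L)"
  by (auto simp: dl_def)

lemma dl_app: "dl (xs @ y # ys) = dl (xs @ [y]) @ dl (y # ys)"
proof (induction xs)
  case Nil then show ?case by simp
next
  case (Cons a xs) then show ?case by (cases xs) auto
qed

lemma dl_snoc: "xs \<noteq> [] \<Longrightarrow> dl (xs @ [y]) = dl xs @ [(last xs, y)]"
proof (induction xs)
  case Nil then show ?case by simp
next
  case (Cons a xs) then show ?case by (cases xs) auto
qed

definition desc :: "nat list \<Rightarrow> bool" where "desc L = sorted_wrt (>) L"

lemma dl_set: "x \<in> set (dl L) \<Longrightarrow> fst x \<in> set L \<and> snd x \<in> set L"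
proof (induction L rule: induct_list012)
  case 1 then show ?case by simp
next
  case (2 x) then show ?case by simp
next
  case (3 a b L) then show ?case by auto
qed

lemma dl_desc: "desc L \<Longrightarrow> x \<in> set (dl L) \<Longrightarrow> snd x < fst x"
proof (induction L rule: induct_list012)
  case 1 then show ?case by simp
next
  case (2 x) then show ?case by simp
next
  case (3 a b L) then show ?case by (auto simp: desc_def)
qed

definition dP :: "nat list list \<Rightarrow> (nat \<times> nat) list" where
  "dP P = concat (map dl P)"

lemma dP_simps[simp]: "dP [] = []" "dP (L # P) = dl L @ dP P" "dP (P @ Q) = dP P @ dP Q"
  by (auto simp: dP_def)

lemma dP_set: "x \<in> set (dP P) \<Longrightarrow> \<exists>L\<in>set P. x \<in> set (dl L)"
  by (auto simp: dP_def)

definition bc :: "nat \<Rightarrow> nat \<times> nat \<Rightarrow> nat \<times> nat \<Rightarrow> bool" where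
  "bc n x y \<longleftrightarrow> braid_eq n (band_word (fst x) (snd x) @ band_word (fst y) (snd y))
      (band_word (fst y) (snd y) @ band_word (fst x) (snd x))"

lemma comm_app_r: "braid_eq n (u @ v1) (v1 @ u) \<Longrightarrow> braid_eq n (u @ v2) (v2 @ u) \<Longrightarrow>
   braid_eq n (u @ v1 @ v2) ((v1 @ v2) @ u)"
proof -
  assume a: "braid_eq n (u @ v1) (v1 @ u)" and b: "braid_eq n (u @ v2) (v2 @ u)"
  have "braid_eq n (u @ v1 @ v2) ([] @ (u @ v1) @ v2)" by (simp add: braid_eq.refl)
  also have "braid_eq n \<dots> ([] @ (v1 @ u) @ v2)" by (rule braid_eq.cong[OF a])
  also have "braid_eq n \<dots> (v1 @ (u @ v2) @ [])" by (simp add: braid_eq.refl)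
  also have "braid_eq n \<dots> (v1 @ (v2 @ u) @ [])" by (rule braid_eq.cong[OF b])
  finally show ?thesis by simp
qed

lemma comm_band1: "(\<And>y. y \<in> set V \<Longrightarrow> bc n x y) \<Longrightarrow>
  braid_eq n (eval_band [x] @ eval_band V) (eval_band V @ eval_band [x])"
proof (induction V)
  case Nil then show ?case by (simp add: braid_eq.refl)
next
  case (Cons y V)
  have "braid_eq n (eval_band [x] @ eval_band [y] @ eval_band V) ((eval_band [y] @ eval_band V) @ eval_band [x])"
    by (rule comm_app_r, use Cons bc_def in auto)
  then show ?case by simp
qed

lemma comm_band: "(\<And>x y. x \<in> set U \<Longrightarrow> y \<in> set V \<Longrightarrow> bc n x y) \<Longrightarrow>
  braid_eq n (eval_band U @ eval_band V) (eval_band V @ eval_band U)"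
proof (induction U)
  case Nil then show ?case by (simp add: braid_eq.refl)
next
  case (Cons x U)
  have a: "braid_eq n (eval_band [x] @ eval_band V) (eval_band V @ eval_band [x])"
    by (rule comm_band1, use Cons in auto)
  have b: "braid_eq n (eval_band U @ eval_band V) (eval_band V @ eval_band U)"
    by (rule Cons.IH, use Cons in auto)
  have "braid_eq n (eval_band (x # U) @ eval_band V) (eval_band [x] @ (eval_band U @ eval_band V) @ [])" by (simp add: braid_eq.refl)
  also have "braid_eq n \<dots> (eval_band [x] @ (eval_band V @ eval_band U) @ [])" by (rule braid_eq.cong[OF b])
  also have "braid_eq n \<dots> ([] @ (eval_band [x] @ eval_band V) @ eval_band U)" by (simp add: braid_eq.refl)
  also have "braid_eq n \<dots> ([] @ (eval_band V @ eval_band [x]) @ eval_band U)" by (rule braid_eq.cong[OF a])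
  finally show ?case by simp
qed

definition cross :: "nat set \<Rightarrow> nat set \<Rightarrow> bool" where
  "cross B C \<longleftrightarrow> (\<exists>a1 a2 c1 c2. a1 \<in> B \<and> a2 \<in> B \<and> c1 \<in> C \<and> c2 \<in> C \<and> a1 < c1 \<and> c1 < a2 \<and> a2 < c2)"

lemma nocross_cond: "\<not> cross B C \<Longrightarrow> \<not> cross C B \<Longrightarrow> p \<in> C \<Longrightarrow> q \<in> C \<Longrightarrow> t \<in> B \<Longrightarrow> s \<in> B \<Longrightarrow>
  q < p \<Longrightarrow> s < t \<Longrightarrow> p \<noteq> t \<Longrightarrow> p \<noteq> s \<Longrightarrow> q \<noteq> t \<Longrightarrow> q \<noteq> s \<Longrightarrow>
  t < q \<or> p < s \<or> (s < q \<and> p < t) \<or> (q < s \<and> t < p)"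
proof (rule ccontr)
  assume a: "\<not> cross B C" "\<not> cross C B" "p \<in> C" "q \<in> C" "t \<in> B" "s \<in> B" "q < p" "s < t"
    "p \<noteq> t" "p \<noteq> s" "q \<noteq> t" "q \<noteq> s" and c: "\<not> (t < q \<or> p < s \<or> (s < q \<and> p < t) \<or> (q < s \<and> t < p))"
  show False
  proof (cases "s < q")
    case True
    then have "q < t" "t < p" using a c by auto
    then have "cross B C" unfolding cross_def using a True by blast
    then show False using a by blast
  next
    case False
    then have "q < s" "s < p" "p < t" using a c by auto
    then have "cross C B" unfolding cross_def using a by blast
    then show False using a by blast
  qed
qed

definition NC :: "nat \<Rightarrow> nat list list \<Rightarrow> bool" where
  "NC n P \<longleftrightarrow> (\<forall>L\<in>set P. desc L \<and> L \<noteq> []) \<and> distinct (concat P) \<and> set (concat P) = {1..n} \<and>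
     (\<forall>B\<in>set P. \<forall>C\<in>set P. B \<noteq> C \<longrightarrow> \<not> cross (set B) (set C))"

lemma close_lem: "desc (t # mid @ [s]) \<Longrightarrow> 1 \<le> s \<Longrightarrow> t \<le> n \<Longrightarrow>
   braid_eq n (eval_band (dl (t # mid @ [s]))) (band_word t s @ eval_band (dl (t # mid)))"
proof (induction mid arbitrary: t)
  case Nil then show ?case by (simp add: braid_eq.refl)
next
  case (Cons m mid)
  have d: "desc (m # mid @ [s])" "s < m" "m < t" using Cons.prems by (auto simp: desc_def)
  have "braid_eq n (eval_band (dl (t # (m # mid) @ [s]))) (band_word t m @ eval_band (dl (m # mid @ [s])))"
    by (simp add: braid_eq.refl)
  also have "braid_eq n \<dots> (band_word t m @ (band_word m s @ eval_band (dl (m # mid))))"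
    by (rule beq_app[OF braid_eq.refl], rule Cons.IH, use d Cons.prems in auto)
  also have "braid_eq n \<dots> ((band_word t m @ band_word m s) @ eval_band (dl (m # mid)))" by (simp add: braid_eq.refl)
  also have "braid_eq n \<dots> ((band_word t s @ band_word t m) @ eval_band (dl (m # mid)))"
    by (rule beq_app[OF _ braid_eq.refl], rule R2a, use d Cons.prems in auto)
  finally show ?case by simp
qed


lemma bc_R1: "1 \<le> s \<Longrightarrow> s < t \<Longrightarrow> t \<le> n \<Longrightarrow> 1 \<le> q \<Longrightarrow> q < r \<Longrightarrow> r \<le> n \<Longrightarrow>
  t < q \<or> r < s \<or> (s < q \<and> r < t) \<or> (q < s \<and> t < r) \<Longrightarrow> bc n (t,s) (r,q)"
  unfolding bc_def using R1 by simp

definition inI :: "nat \<Rightarrow> nat \<Rightarrow> nat \<Rightarrow> bool" where "inI s t x \<longleftrightarrow> s < x \<and> x \<le> t"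

lemma desc_app: "desc (xs @ ys) \<longleftrightarrow> desc xs \<and> desc ys \<and> (\<forall>x\<in>set xs. \<forall>y\<in>set ys. y < x)"
  unfolding desc_def by (simp add: sorted_wrt_append)

lemma desc_Nil[simp]: "desc []" by (simp add: desc_def)

lemma desc_Cons: "desc (x # xs) \<longleftrightarrow> (\<forall>y\<in>set xs. y < x) \<and> desc xs"
  unfolding desc_def by simp

lemma BL: "desc L \<Longrightarrow> t \<in> set L \<Longrightarrow> s \<in> set L \<Longrightarrow> s < t \<Longrightarrow> 1 \<le> s \<Longrightarrow> (\<forall>x\<in>set L. 1 \<le> x \<and> x \<le> n) \<Longrightarrow>
  braid_eq n (eval_band (dl L)) (band_word t s @ eval_band (dl (filter (inI s t) L)) @ eval_band (dl (filter (Not \<circ> inI s t) L)))"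
proof -
  assume a: "desc L" "t \<in> set L" "s \<in> set L" "s < t" "1 \<le> s" "\<forall>x\<in>set L. 1 \<le> x \<and> x \<le> n"
  obtain pre ys where L1: "L = pre @ t # ys" using split_list[OF a(2)] by blast
  have pre_gt: "\<forall>x\<in>set pre. t < x" and dys: "desc ys" "\<forall>y\<in>set ys. y < t" and dpre: "desc pre"
    using a(1) unfolding L1 by (auto simp: desc_app desc_Cons)
  have sys: "s \<in> set ys" using a(3,4) pre_gt unfolding L1 by auto
  obtain mid post where ys: "ys = mid @ s # post" using split_list[OF sys] by blast
  have mid: "\<forall>x\<in>set mid. s < x \<and> x < t" and post: "\<forall>x\<in>set post. x < s"
    using dys unfolding ys by (auto simp: desc_app desc_Cons)
  have L: "L = pre @ t # mid @ s # post" using L1 ys by simp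
  have g1: "filter (inI s t) pre = []" "filter (inI s t) post = []" "filter (inI s t) mid = mid"
    using pre_gt post mid by (auto simp: inI_def filter_empty_conv intro!: filter_True)
  have g2: "filter (Not \<circ> inI s t) pre = pre" "filter (Not \<circ> inI s t) post = post" "filter (Not \<circ> inI s t) mid = []"
    using pre_gt post mid by (auto simp: inI_def filter_empty_conv intro!: filter_True)
  have f1: "filter (inI s t) L = t # mid"
    unfolding L using g1 a(4) by (simp add: inI_def)
  have f2: "filter (Not \<circ> inI s t) L = pre @ s # post"
    unfolding L using g2 a(4) by (simp add: inI_def)
  have dc: "desc (t # mid @ [s])" using a(1) unfolding L by (auto simp: desc_app desc_Cons)
  have rng: "\<forall>x\<in>set L. 1 \<le> x \<and> x \<le> n"
    using a(6) .
  have cl: "braid_eq n (eval_band (dl (t # mid @ [s]))) (band_word t s @ eval_band (dl (t # mid)))"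
    by (rule close_lem[OF dc a(5)], use a L in auto)
  have eL: "dl L = dl (pre @ [t]) @ dl (t # mid @ [s]) @ dl (s # post)"
    unfolding L using dl_app[of pre t "mid @ s # post"] dl_app[of "t # mid" s post] by simp
  show ?thesis
  proof (cases "pre = []")
    case True
    have "braid_eq n (eval_band (dl L)) ([] @ eval_band (dl (t # mid @ [s])) @ eval_band (dl (s # post)))"
      unfolding eL using True by (simp add: braid_eq.refl)
    also have "braid_eq n \<dots> ([] @ (band_word t s @ eval_band (dl (t # mid))) @ eval_band (dl (s # post)))"
      by (rule braid_eq.cong[OF cl])
    finally show ?thesis unfolding f1 f2 using True by simp
  next
    case False
    define p where "p = last pre"
    have pin: "p \<in> set pre" using False p_def by simp
    have ept: "dl (pre @ [t]) = dl pre @ [(p,t)]" using dl_snoc[OF False] p_def by simp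
    have eps: "dl (pre @ s # post) = dl pre @ [(p,s)] @ dl (s # post)"
      using dl_app[of pre s post] dl_snoc[OF False, of s] p_def by simp
    have ptn: "t < p" "p \<le> n" using pin pre_gt rng unfolding L by auto
    let ?E = "eval_band"
    have "braid_eq n (?E (dl L)) (?E (dl pre) @ band_word p t @ ?E (dl (t # mid @ [s])) @ ?E (dl (s # post)))"
      unfolding eL ept by (simp add: braid_eq.refl)
    also have "braid_eq n \<dots> ((?E (dl pre) @ band_word p t) @ (band_word t s @ ?E (dl (t # mid))) @ ?E (dl (s # post)))"
      using braid_eq.cong[OF cl, of "?E (dl pre) @ band_word p t" "?E (dl (s # post))"] by simp
    also have "braid_eq n \<dots> (?E (dl pre) @ (band_word p t @ band_word t s) @ ?E (dl (t # mid)) @ ?E (dl (s # post)))"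
      by (simp add: braid_eq.refl)
    also have "braid_eq n \<dots> (?E (dl pre) @ (band_word t s @ band_word p s) @ ?E (dl (t # mid)) @ ?E (dl (s # post)))"
      by (rule braid_eq.cong, rule R2c, use a ptn in auto)
    also have "braid_eq n \<dots> ((?E (dl pre) @ band_word t s) @ (?E [(p,s)] @ ?E (dl (t # mid))) @ ?E (dl (s # post)))"
      by (simp add: braid_eq.refl)
    also have "braid_eq n \<dots> ((?E (dl pre) @ band_word t s) @ (?E (dl (t # mid)) @ ?E [(p,s)]) @ ?E (dl (s # post)))"
    proof (rule braid_eq.cong, rule comm_band)
      fix x y assume x: "x \<in> set [(p,s)]" and y: "y \<in> set (dl (t # mid))"
      have y1: "fst y \<in> set (t # mid)" "snd y \<in> set (t # mid)" using dl_set[OF y] by auto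
      have y2: "snd y < fst y" using dl_desc[OF _ y] dc by (auto simp: desc_app desc_Cons)
      have "s < snd y" "fst y \<le> t" using y1 y2 mid by auto
      then show "bc n x y" using x bc_R1[of s p n "snd y" "fst y"] y2 a ptn by auto
    qed
    also have "braid_eq n \<dots> ([] @ (?E (dl pre) @ ?E ((t,s) # dl (t # mid))) @ (?E [(p,s)] @ ?E (dl (s # post))))"
      by (simp add: braid_eq.refl)
    also have "braid_eq n \<dots> ([] @ (?E ((t,s) # dl (t # mid)) @ ?E (dl pre)) @ (?E [(p,s)] @ ?E (dl (s # post))))"
    proof (rule braid_eq.cong, rule comm_band)
      fix x y assume x: "x \<in> set (dl pre)" and y: "y \<in> set ((t,s) # dl (t # mid))"
      have x1: "fst x \<in> set pre" "snd x \<in> set pre" "snd x < fst x" using dl_set[OF x] dl_desc[OF dpre x] by auto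
      have y1: "fst y \<le> t \<and> s \<le> snd y \<and> snd y < fst y"
      proof (cases "y = (t,s)")
        case True then show ?thesis using a by auto
      next
        case False
        then have y': "y \<in> set (dl (t # mid))" using y by simp
        have "fst y \<in> set (t # mid)" "snd y \<in> set (t # mid)" using dl_set[OF y'] by auto
        moreover have "snd y < fst y" using dl_desc[OF _ y'] dc by (auto simp: desc_app desc_Cons)
        ultimately show ?thesis using mid by auto
      qed
      have "t < snd x" "fst x \<le> n" using x1 pre_gt rng unfolding L by auto
      then show "bc n x y" using bc_R1[of "snd x" "fst x" n "snd y" "fst y"] x1 y1 a by auto
    qed
    finally show ?thesis unfolding f1 f2 eps by simp
  qed
qed


lemma NC_desc: "NC n P \<Longrightarrow> L \<in> set P \<Longrightarrow> desc L \<and> L \<noteq> []"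
  unfolding NC_def by blast
lemma NC_rng: "NC n P \<Longrightarrow> L \<in> set P \<Longrightarrow> x \<in> set L \<Longrightarrow> 1 \<le> x \<and> x \<le> n"
  unfolding NC_def by auto
lemma NC_disj: "NC n P \<Longrightarrow> B \<in> set P \<Longrightarrow> C \<in> set P \<Longrightarrow> B \<noteq> C \<Longrightarrow> set B \<inter> set C = {}"
  unfolding NC_def distinct_concat_iff by blast
lemma NC_nc: "NC n P \<Longrightarrow> B \<in> set P \<Longrightarrow> C \<in> set P \<Longrightarrow> B \<noteq> C \<Longrightarrow> \<not> cross (set B) (set C)"
  unfolding NC_def by blast

lemma NC_ne: "NC n P \<Longrightarrow> B \<in> set P \<Longrightarrow> C \<in> set P \<Longrightarrow> x \<in> set B \<Longrightarrow> x \<in> set C \<Longrightarrow> B = C"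
  using NC_disj by blast

definition split_at :: "nat \<times> nat \<Rightarrow> nat list list \<Rightarrow> nat list \<Rightarrow> nat list list \<Rightarrow> nat list list" where
  "split_at a P1 L P2 = P1 @ filter (inI (snd a) (fst a)) L # filter (Not \<circ> inI (snd a) (fst a)) L # P2"

lemma BS: "NC n (P1 @ L # P2) \<Longrightarrow> t \<in> set L \<Longrightarrow> s \<in> set L \<Longrightarrow> s < t \<Longrightarrow>
  braid_eq n (eval_band (dP (P1 @ L # P2))) (band_word t s @ eval_band (dP (split_at (t,s) P1 L P2)))"
proof -
  assume a: "NC n (P1 @ L # P2)" "t \<in> set L" "s \<in> set L" "s < t"
  let ?P = "P1 @ L # P2"
  let ?E = eval_band
  let ?L1 = "filter (inI s t) L"
  let ?L2 = "filter (Not \<circ> inI s t) L"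
  have LP: "L \<in> set ?P" by simp
  have dL: "desc L" "L \<noteq> []" using NC_desc[OF a(1) LP] by auto
  have rL: "\<forall>x\<in>set L. 1 \<le> x \<and> x \<le> n" using NC_rng[OF a(1) LP] by blast
  have bl: "braid_eq n (?E (dl L)) (band_word t s @ ?E (dl ?L1) @ ?E (dl ?L2))"
    by (rule BL[OF dL(1) a(2,3,4)], use rL a in auto)
  have "braid_eq n (?E (dP ?P)) (?E (dP P1) @ ?E (dl L) @ ?E (dP P2))" by (simp add: braid_eq.refl)
  also have "braid_eq n \<dots> (?E (dP P1) @ (band_word t s @ ?E (dl ?L1) @ ?E (dl ?L2)) @ ?E (dP P2))"
    by (rule braid_eq.cong[OF bl])
  also have "braid_eq n \<dots> ([] @ (?E (dP P1) @ ?E [(t,s)]) @ (?E (dl ?L1) @ ?E (dl ?L2) @ ?E (dP P2)))"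
    by (simp add: braid_eq.refl)
  also have "braid_eq n \<dots> ([] @ (?E [(t,s)] @ ?E (dP P1)) @ (?E (dl ?L1) @ ?E (dl ?L2) @ ?E (dP P2)))"
  proof (rule braid_eq.cong, rule comm_band)
    fix x y assume x: "x \<in> set (dP P1)" and y: "y \<in> set [(t,s)]"
    obtain C where C: "C \<in> set P1" "x \<in> set (dl C)" using dP_set[OF x] by blast
    have CP: "C \<in> set ?P" using C by simp
    have CL: "C \<noteq> L"
    proof
      assume "C = L"
      then have "distinct (concat P1 @ L)" "set L \<subseteq> set (concat P1)" using a(1) C unfolding NC_def by auto
      then show False using dL by (cases L) auto
    qed
    have x1: "fst x \<in> set C" "snd x \<in> set C" "snd x < fst x" using dl_set[OF C(2)] dl_desc[OF _ C(2)] NC_desc[OF a(1) CP] by auto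
    have dj: "set C \<inter> set L = {}" using NC_disj[OF a(1) CP LP CL] .
    have nc: "\<not> cross (set C) (set L)" "\<not> cross (set L) (set C)" using NC_nc[OF a(1)] CP LP CL by auto
    have cnd: "t < snd x \<or> fst x < s \<or> (s < snd x \<and> fst x < t) \<or> (snd x < s \<and> t < fst x)"
      by (rule nocross_cond[OF nc(2) nc(1) x1(1,2) a(2,3) x1(3) a(4)], use dj x1 a in auto)
    have r: "1 \<le> snd x" "fst x \<le> n" "1 \<le> s" "t \<le> n" using NC_rng[OF a(1)] CP LP x1 a by auto
    show "bc n x y" using bc_R1[of "snd x" "fst x" n s t] r x1 cnd y a(4) by auto
  qed
  finally show ?thesis unfolding split_at_def by simp
qed

lemma cross_mono: "cross A C \<Longrightarrow> A \<subseteq> A' \<Longrightarrow> C \<subseteq> C' \<Longrightarrow> cross A' C'"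
  unfolding cross_def by blast

lemma dis_app: "distinct (xs @ ys) \<Longrightarrow> x \<in> set xs \<Longrightarrow> x \<in> set ys \<Longrightarrow> False"
  by (auto simp: distinct_append)

lemma NC_split: "NC n (P1 @ L # P2) \<Longrightarrow> t \<in> set L \<Longrightarrow> s \<in> set L \<Longrightarrow> s < t \<Longrightarrow>
  NC n (split_at (t,s) P1 L P2)"
proof -
  assume a: "NC n (P1 @ L # P2)" "t \<in> set L" "s \<in> set L" "s < t"
  let ?P = "P1 @ L # P2"
  let ?L1 = "filter (inI s t) L"
  let ?L2 = "filter (Not \<circ> inI s t) L"
  have LP: "L \<in> set ?P" by simp
  have dL: "desc L" "L \<noteq> []" using NC_desc[OF a(1) LP] by auto
  have i1: "t \<in> set ?L1" "s \<in> set ?L2" using a by (auto simp: inI_def)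
  have s12: "set ?L1 \<subseteq> set L" "set ?L2 \<subseteq> set L" "set ?L1 \<union> set ?L2 = set L" by auto
  have d1: "\<forall>B\<in>set (split_at (t,s) P1 L P2). desc B \<and> B \<noteq> []"
    using a(1) i1 dL unfolding split_at_def NC_def desc_def by (auto intro: sorted_wrt_filter simp: filter_empty_conv)
  have dist0: "distinct (concat P1 @ L @ concat P2)" using a(1) unfolding NC_def by simp
  have d2: "distinct (concat (split_at (t,s) P1 L P2))"
  proof -
    have "distinct (?L1 @ ?L2)" using dist0 by (auto simp: distinct_append)
    moreover have "set (?L1 @ ?L2) = set L" by auto
    ultimately show ?thesis using dist0 unfolding split_at_def by (auto simp: distinct_append)
  qed
  have d3: "set (concat (split_at (t,s) P1 L P2)) = {1..n}"
    using a(1) s12 unfolding NC_def split_at_def by auto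
  have oldL: "C \<in> set P1 \<or> C \<in> set P2 \<Longrightarrow> C \<noteq> L" for C
  proof
    assume c: "C \<in> set P1 \<or> C \<in> set P2" and e: "C = L"
    have x: "hd L \<in> set L" using dL(2) by simp
    have "L \<in> set P1 \<or> L \<in> set P2" using c e by simp
    then show False
    proof
      assume "L \<in> set P1"
      then have "hd L \<in> set (concat P1)" using x unfolding set_concat by blast
      moreover have "hd L \<in> set (L @ concat P2)" using x by simp
      ultimately show False using dis_app[OF dist0] by blast
    next
      assume "L \<in> set P2"
      then have "hd L \<in> set (concat P2)" using x unfolding set_concat by blast
      moreover have "hd L \<in> set (concat P1 @ L)" using x by simp
      moreover have "distinct ((concat P1 @ L) @ concat P2)" using dist0 by simp
      ultimately show False using dis_app[of "concat P1 @ L" "concat P2" "hd L"] by blast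
    qed
  qed
  have in12: "\<not> cross (set ?L1) (set ?L2)" "\<not> cross (set ?L2) (set ?L1)"
  proof -
    show "\<not> cross (set ?L1) (set ?L2)"
    proof
      assume "cross (set ?L1) (set ?L2)"
      then obtain a1 a2 c1 c2 where "a1 \<in> set ?L1" "a2 \<in> set ?L1" "c1 \<in> set ?L2" "a1 < c1" "c1 < a2"
        unfolding cross_def by blast
      then show False by (auto simp: inI_def)
    qed
    show "\<not> cross (set ?L2) (set ?L1)"
    proof
      assume "cross (set ?L2) (set ?L1)"
      then obtain a2 c1 c2 where "a2 \<in> set ?L2" "c1 \<in> set ?L1" "c2 \<in> set ?L1" "c1 < a2" "a2 < c2"
        unfolding cross_def by blast
      then show False by (auto simp: inI_def)
    qed
  qed
  have d4: "\<forall>B\<in>set (split_at (t,s) P1 L P2). \<forall>C\<in>set (split_at (t,s) P1 L P2). B \<noteq> C \<longrightarrow> \<not> cross (set B) (set C)"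
  proof (intro ballI impI)
    fix B C assume B: "B \<in> set (split_at (t,s) P1 L P2)" and C: "C \<in> set (split_at (t,s) P1 L P2)" and BC: "B \<noteq> C"
    have Bc: "B \<in> set ?P \<or> B = ?L1 \<or> B = ?L2" using B unfolding split_at_def by auto
    have Cc: "C \<in> set ?P \<or> C = ?L1 \<or> C = ?L2" using C unfolding split_at_def by auto
    have Bo: "B \<in> set ?P \<Longrightarrow> B \<noteq> L \<Longrightarrow> B \<in> set P1 \<or> B \<in> set P2" by auto
    show "\<not> cross (set B) (set C)"
    proof (cases "B \<in> set P1 \<or> B \<in> set P2")
      case Bold: True
      then have BP: "B \<in> set ?P" "B \<noteq> L" using oldL by auto
      show ?thesis
      proof (cases "C \<in> set P1 \<or> C \<in> set P2")
        case True
        then have "C \<in> set ?P" by auto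
        then show ?thesis using NC_nc[OF a(1) BP(1) _ BC] by blast
      next
        case False
        then have "set C \<subseteq> set L" using C unfolding split_at_def by auto
        then show ?thesis using NC_nc[OF a(1) BP(1) LP BP(2)] cross_mono by blast
      qed
    next
      case Bnew: False
      then have sB: "set B \<subseteq> set L" "B = ?L1 \<or> B = ?L2" using B unfolding split_at_def by auto
      show ?thesis
      proof (cases "C \<in> set P1 \<or> C \<in> set P2")
        case True
        then have CP: "C \<in> set ?P" "C \<noteq> L" using oldL by auto
        then show ?thesis using NC_nc[OF a(1) LP CP(1) CP(2)[symmetric]] cross_mono sB by blast
      next
        case False
        then have "C = ?L1 \<or> C = ?L2" using C unfolding split_at_def by auto
        then show ?thesis using sB(2) BC in12 by auto
      qed
    qed
  qed
  show ?thesis unfolding NC_def by (intro conjI d1 d2 d3 d4)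
qed


lemma OBS1: "1 \<le> q \<Longrightarrow> q < p \<Longrightarrow> p \<le> n \<Longrightarrow> 1 \<le> s \<Longrightarrow> s < t \<Longrightarrow> t \<le> n \<Longrightarrow>
  inI s t p \<noteq> inI s t q \<Longrightarrow> obstructing n (t,s) (p,q)"
proof -
  assume a: "1 \<le> q" "q < p" "p \<le> n" "1 \<le> s" "s < t" "t \<le> n" "inI s t p \<noteq> inI s t q"
  show ?thesis
  proof (cases "inI s t p")
    case True
    then have pq: "s < p" "p \<le> t" "q \<le> s" using a unfolding inI_def by auto
    show ?thesis
    proof (cases "q < s")
      case qs: True
      show ?thesis
      proof (cases "p < t")
        case True
        show ?thesis unfolding obstructing_def
          by (rule disjI1, rule exI[of _ t], rule exI[of _ p], rule exI[of _ s], rule exI[of _ q])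
             (use a pq qs True in auto)
      next
        case False
        then have "p = t" using pq by auto
        show ?thesis unfolding obstructing_def
          by (rule disjI2, rule disjI1, rule exI[of _ t], rule exI[of _ s], rule exI[of _ q])
             (use a pq qs \<open>p = t\<close> in auto)
      qed
    next
      case False
      then have qs: "q = s" using pq by auto
      show ?thesis
      proof (cases "p < t")
        case True
        show ?thesis unfolding obstructing_def
          by (rule disjI2, rule disjI1, rule exI[of _ t], rule exI[of _ p], rule exI[of _ s])
             (use a pq qs True in auto)
      next
        case False
        then have "p = t" using pq by auto
        show ?thesis unfolding obstructing_def
          by (rule disjI2, rule disjI2, rule exI[of _ t], rule exI[of _ s])
             (use a pq qs \<open>p = t\<close> in auto)
      qed
    qed
  next
    case False
    then have pq: "s < q" "q \<le> t" "t < p" using a unfolding inI_def by auto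
    show ?thesis
    proof (cases "q < t")
      case True
      show ?thesis unfolding obstructing_def
        by (rule disjI1, rule exI[of _ p], rule exI[of _ t], rule exI[of _ q], rule exI[of _ s])
           (use a pq True in auto)
    next
      case False
      then have "q = t" using pq by auto
      show ?thesis unfolding obstructing_def
        by (rule disjI2, rule disjI1, rule exI[of _ p], rule exI[of _ t], rule exI[of _ s])
           (use a pq \<open>q = t\<close> in auto)
    qed
  qed
qed

lemma OBS2: "obstructing n (t,s) (p,q) \<Longrightarrow> s < t \<and> q < p \<and> 1 \<le> q \<and> p \<le> n \<and> 1 \<le> s \<and> t \<le> n \<and>
   inI s t p \<noteq> inI s t q \<and> (p = t \<or> p = s \<or> q = t \<or> q = s \<or> (s < q \<and> q < t \<and> t < p) \<or> (q < s \<and> s < p \<and> p < t))"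
  unfolding obstructing_def inI_def by auto

fun ofree :: "nat \<Rightarrow> (nat \<times> nat) list \<Rightarrow> bool" where
  "ofree n [] = True"
| "ofree n (a # T) = ((\<forall>x\<in>set T. \<not> obstructing n a x) \<and> ofree n T)"

lemma ofree_iff: "ofree n T \<longleftrightarrow> \<not> (\<exists>B a C b D. T = B @ [a] @ C @ [b] @ D \<and> obstructing n a b)"
proof (induction T)
  case Nil then show ?case by simp
next
  case (Cons x T)
  have "(\<exists>B a C b D. x # T = B @ [a] @ C @ [b] @ D \<and> obstructing n a b) \<longleftrightarrow>
     (\<exists>b\<in>set T. obstructing n x b) \<or> (\<exists>B a C b D. T = B @ [a] @ C @ [b] @ D \<and> obstructing n a b)"
  proof
    assume "\<exists>B a C b D. x # T = B @ [a] @ C @ [b] @ D \<and> obstructing n a b"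
    then obtain B a C b D where e: "x # T = B @ [a] @ C @ [b] @ D" "obstructing n a b" by blast
    show "(\<exists>b\<in>set T. obstructing n x b) \<or> (\<exists>B a C b D. T = B @ [a] @ C @ [b] @ D \<and> obstructing n a b)"
    proof (cases B)
      case Nil
      then have "a = x" "T = C @ [b] @ D" using e by auto
      then show ?thesis using e by auto
    next
      case (Cons y B')
      then have "T = B' @ [a] @ C @ [b] @ D" using e by auto
      then show ?thesis using e by blast
    qed
  next
    assume "(\<exists>b\<in>set T. obstructing n x b) \<or> (\<exists>B a C b D. T = B @ [a] @ C @ [b] @ D \<and> obstructing n a b)"
    then show "\<exists>B a C b D. x # T = B @ [a] @ C @ [b] @ D \<and> obstructing n a b"
    proof
      assume "\<exists>b\<in>set T. obstructing n x b"
      then obtain b where b: "b \<in> set T" "obstructing n x b" by blast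
      obtain C D where "T = C @ b # D" using split_list[OF b(1)] by blast
      then have "x # T = [] @ [x] @ C @ [b] @ D" by simp
      then show ?thesis using b by blast
    next
      assume "\<exists>B a C b D. T = B @ [a] @ C @ [b] @ D \<and> obstructing n a b"
      then obtain B a C b D where "T = B @ [a] @ C @ [b] @ D" "obstructing n a b" by blast
      then have "x # T = (x # B) @ [a] @ C @ [b] @ D" "obstructing n a b" by auto
      then show ?thesis by blast
    qed
  qed
  then show ?case using Cons.IH by auto
qed

lemma ofree_app: "ofree n (X @ Y) \<Longrightarrow> ofree n Y"
  by (induction X) auto

lemma ofree_app2: "ofree n (X @ Y) \<Longrightarrow> ofree n X"
  by (induction X) auto

definition within :: "nat \<times> nat \<Rightarrow> nat list list \<Rightarrow> bool" where
  "within x P \<longleftrightarrow> (\<exists>C\<in>set P. fst x \<in> set C \<and> snd x \<in> set C)"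

lemma WS: "NC n (P1 @ L # P2) \<Longrightarrow> t \<in> set L \<Longrightarrow> s \<in> set L \<Longrightarrow> s < t \<Longrightarrow>
  within x (P1 @ L # P2) \<Longrightarrow> snd x < fst x \<Longrightarrow> \<not> obstructing n (t,s) x \<Longrightarrow> within x (split_at (t,s) P1 L P2)"
proof -
  assume a: "NC n (P1 @ L # P2)" "t \<in> set L" "s \<in> set L" "s < t" "within x (P1 @ L # P2)"
    "snd x < fst x" "\<not> obstructing n (t,s) x"
  obtain p q where x: "x = (p,q)" by (cases x)
  obtain C where C: "C \<in> set (P1 @ L # P2)" "p \<in> set C" "q \<in> set C" using a(5) x unfolding within_def by auto
  show ?thesis
  proof (cases "C \<in> set P1 \<or> C \<in> set P2")
    case True
    then show ?thesis using C x unfolding within_def split_at_def by auto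
  next
    case False
    then have CL: "C = L" using C by auto
    have LP: "L \<in> set (P1 @ L # P2)" by simp
    have r: "1 \<le> q" "p \<le> n" "1 \<le> s" "t \<le> n" using NC_rng[OF a(1)] C LP a(2,3) by auto
    have "inI s t p = inI s t q"
      using OBS1[of q p n s t] a(6,7) r a(4) x by auto
    then have "(p \<in> set (filter (inI s t) L) \<and> q \<in> set (filter (inI s t) L)) \<or>
       (p \<in> set (filter (Not \<circ> inI s t) L) \<and> q \<in> set (filter (Not \<circ> inI s t) L))"
      using C CL by auto
    then show ?thesis using x unfolding within_def split_at_def by auto
  qed
qed

lemma dP_pos: "NC n P \<Longrightarrow> positive_word n (dP P)"
  unfolding positive_word_def band_gens_def
proof
  fix x assume N: "NC n P" and x: "x \<in> set (dP P)"
  obtain C where C: "C \<in> set P" "x \<in> set (dl C)" using dP_set[OF x] by blast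
  have "fst x \<in> set C" "snd x \<in> set C" "snd x < fst x" using dl_set[OF C(2)] dl_desc[OF _ C(2)] NC_desc[OF N C(1)] by auto
  then show "x \<in> {(t, s). 1 \<le> s \<and> s < t \<and> t \<le> n}" using NC_rng[OF N C(1)] by (cases x) auto
qed

lemma SUF: "NC n P \<Longrightarrow> (\<forall>x\<in>set A. within x P \<and> snd x < fst x) \<Longrightarrow> ofree n A \<Longrightarrow>
  \<exists>Q. positive_word n Q \<and> braid_eq n (eval_band (dP P)) (eval_band A @ eval_band Q)"
proof (induction A arbitrary: P)
  case Nil
  then show ?case using dP_pos[OF Nil(1)] by (auto intro!: exI[of _ "dP P"] braid_eq.refl)
next
  case (Cons a A)
  obtain t s where a: "a = (t,s)" by (cases a)
  obtain L where L: "L \<in> set P" "t \<in> set L" "s \<in> set L" using Cons.prems(2) a unfolding within_def by auto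
  have st: "s < t" using Cons.prems(2) a by auto
  obtain P1 P2 where P: "P = P1 @ L # P2" using split_list[OF L(1)] by blast
  have N: "NC n (P1 @ L # P2)" using Cons.prems(1) P by simp
  have N': "NC n (split_at (t,s) P1 L P2)" by (rule NC_split[OF N L(2,3) st])
  have W: "\<forall>x\<in>set A. within x (split_at (t,s) P1 L P2) \<and> snd x < fst x"
  proof
    fix x assume x: "x \<in> set A"
    have "within x (P1 @ L # P2)" "snd x < fst x" using Cons.prems(2) x P by auto
    moreover have "\<not> obstructing n (t,s) x" using Cons.prems(3) a x by auto
    ultimately show "within x (split_at (t,s) P1 L P2) \<and> snd x < fst x"
      using WS[OF N L(2,3) st] by blast
  qed
  obtain Q where Q: "positive_word n Q" "braid_eq n (eval_band (dP (split_at (t,s) P1 L P2))) (eval_band A @ eval_band Q)"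
    using Cons.IH[OF N' W] Cons.prems(3) by auto
  have "braid_eq n (eval_band (dP P)) (band_word t s @ eval_band (dP (split_at (t,s) P1 L P2)))"
    using BS[OF N L(2,3) st] P by simp
  also have "braid_eq n \<dots> (band_word t s @ (eval_band A @ eval_band Q))"
    by (rule beq_app[OF braid_eq.refl Q(2)])
  finally show ?case using Q(1) a by auto
qed


definition tr :: "nat \<Rightarrow> nat \<Rightarrow> nat \<Rightarrow> nat" where
  "tr a b x = (if x = a then b else if x = b then a else x)"

fun permw :: "art_word \<Rightarrow> nat \<Rightarrow> nat" where
  "permw [] = id"
| "permw (l # w) = tr (fst l) (Suc (fst l)) \<circ> permw w"

lemma permw_app[simp]: "permw (u @ v) = permw u \<circ> permw v"
  by (induction u) auto

lemma permw_inv: "braid_eq n u v \<Longrightarrow> permw u = permw v"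
proof (induction rule: braid_eq.induct)
  case (cancel i b) then show ?case by (auto simp: fun_eq_iff tr_def)
next
  case (comm i j) then show ?case by (auto simp: fun_eq_iff tr_def)
next
  case (braid i) then show ?case by (auto simp: fun_eq_iff tr_def)
qed auto

lemma permw_bw: "s < t \<Longrightarrow> permw (band_word t s) = tr s t"
proof -
  assume "s < t"
  then have "Suc s \<le> t" by simp
  then show ?thesis
  proof (induction t rule: dec_induct)
    case base then show ?case by (simp add: bw_base)
  next
    case (step m)
    then show ?case by (simp add: bw_Suc fun_eq_iff tr_def)
  qed
qed

definition ptr :: "(nat \<times> nat) list \<Rightarrow> nat \<Rightarrow> nat" where
  "ptr T = permw (eval_band T)"

lemma ptr_Nil[simp]: "ptr [] = id" by (simp add: ptr_def)

lemma ptr_Cons: "snd a < fst a \<Longrightarrow> ptr (a # T) = tr (snd a) (fst a) \<circ> ptr T"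
  by (simp add: ptr_def permw_bw)

lemma ptr_app: "ptr (U @ V) = ptr U \<circ> ptr V" by (simp add: ptr_def)

lemma tr_tr[simp]: "tr a b (tr a b x) = x" by (simp add: tr_def)

definition edges :: "(nat \<times> nat) list \<Rightarrow> (nat \<times> nat) set" where
  "edges E = {(x,y). (x,y) \<in> set E \<or> (y,x) \<in> set E}"

definition conn :: "(nat \<times> nat) list \<Rightarrow> nat \<Rightarrow> nat \<Rightarrow> bool" where
  "conn E x y \<longleftrightarrow> (x,y) \<in> (edges E)\<^sup>*"

lemma conn_refl[simp]: "conn E x x" by (simp add: conn_def)

lemma conn_trans: "conn E x y \<Longrightarrow> conn E y z \<Longrightarrow> conn E x z"
  unfolding conn_def by (rule rtrancl_trans)

lemma conn_sym: "conn E x y \<Longrightarrow> conn E y x"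
proof -
  have s: "sym (edges E)" unfolding sym_def edges_def by auto
  show "conn E x y \<Longrightarrow> conn E y x" unfolding conn_def using sym_rtrancl[OF s] unfolding sym_def by blast
qed

lemma conn_edge: "(x,y) \<in> set E \<Longrightarrow> conn E x y"
  unfolding conn_def edges_def by auto

lemma conn_Cons: "conn E x y \<Longrightarrow> conn (e # E) x y"
proof -
  have "edges E \<subseteq> edges (e # E)" unfolding edges_def by auto
  then show "conn E x y \<Longrightarrow> conn (e # E) x y" unfolding conn_def using rtrancl_mono by blast
qed

lemma conn_Nil: "conn [] x y \<Longrightarrow> x = y"
  unfolding conn_def edges_def by simp

lemma conn_new: "conn (e # E) x y \<Longrightarrow>
  conn E x y \<or> ((conn E x (fst e) \<or> conn E x (snd e)) \<and> (conn E y (fst e) \<or> conn E y (snd e)))"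
proof -
  assume "conn (e # E) x y"
  then have "(x,y) \<in> (edges (e # E))\<^sup>*" unfolding conn_def .
  then show ?thesis
  proof (induction rule: rtrancl_induct)
    case base then show ?case by simp
  next
    case (step y z)
    have yz: "(y,z) \<in> edges E \<or> (y = fst e \<and> z = snd e) \<or> (y = snd e \<and> z = fst e)"
      using step(2) unfolding edges_def by (cases e) auto
    show ?case
    proof (cases "(y,z) \<in> edges E")
      case True
      then have c: "conn E y z" "conn E z y" using conn_sym unfolding conn_def by auto
      then show ?thesis using step(3) conn_trans by blast
    next
      case False
      then have "(y = fst e \<and> z = snd e) \<or> (y = snd e \<and> z = fst e)" using yz by blast
      then show ?thesis using step(3) by auto
    qed
  qed
qed

lemma IS: "finite V \<Longrightarrow> \<exists>S\<subseteq>V. card V \<le> card S + length E \<and> (\<forall>x\<in>S. \<forall>y\<in>S. conn E x y \<longrightarrow> x = y)"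
proof (induction E)
  case Nil then show ?case using conn_Nil by (intro exI[of _ V]) auto
next
  case (Cons e E)
  obtain S where S: "S \<subseteq> V" "card V \<le> card S + length E" "\<forall>x\<in>S. \<forall>y\<in>S. conn E x y \<longrightarrow> x = y"
    using Cons by blast
  define Z where "Z = {z\<in>S. conn E z (fst e)}"
  have fS: "finite S" using S(1) Cons.prems finite_subset by blast
  have ZS: "Z \<subseteq> S" unfolding Z_def by auto
  have fZ: "finite Z" using ZS fS finite_subset by blast
  have "\<forall>a\<in>Z. \<forall>b\<in>Z. a = b"
  proof (intro ballI)
    fix a b assume "a \<in> Z" "b \<in> Z"
    then have "conn E a (fst e)" "conn E b (fst e)" "a \<in> S" "b \<in> S" unfolding Z_def by auto
    then show "a = b" using S(3) conn_sym conn_trans by blast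
  qed
  then have cZ: "card Z \<le> 1" using card_le_Suc0_iff_eq[OF fZ] by simp
  have cD: "card (S - Z) = card S - card Z" using card_Diff_subset[OF fZ ZS] .
  have cZS: "card Z \<le> card S" using card_mono[OF fS ZS] .
  show ?case
  proof (intro exI[of _ "S - Z"] conjI)
    show "S - Z \<subseteq> V" using S(1) by auto
    show "card V \<le> card (S - Z) + length (e # E)" using S(2) cD cZ cZS by simp
    show "\<forall>x\<in>S - Z. \<forall>y\<in>S - Z. conn (e # E) x y \<longrightarrow> x = y"
    proof (intro ballI impI)
      fix x y assume x: "x \<in> S - Z" and y: "y \<in> S - Z" and c: "conn (e # E) x y"
      show "x = y"
      proof (rule ccontr)
        assume ne: "x \<noteq> y"
        then have nc: "\<not> conn E x y" using S(3) x y by auto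
        have nx: "\<not> conn E x (fst e)" "\<not> conn E y (fst e)" using x y unfolding Z_def by auto
        have "conn E x (snd e)" "conn E y (snd e)" using conn_new[OF c] nc nx by auto
        then have "conn E x y" using conn_sym conn_trans by blast
        then show False using nc by simp
      qed
    qed
  qed
qed

lemma PC: "\<forall>x\<in>set T. snd x < fst x \<Longrightarrow> conn T (ptr T z) z"
proof (induction T)
  case Nil then show ?case by simp
next
  case (Cons a T)
  have ih: "conn (a # T) (ptr T z) z" using Cons conn_Cons by auto
  have e: "ptr (a # T) z = tr (snd a) (fst a) (ptr T z)" using ptr_Cons Cons.prems by simp
  have "conn (a # T) (tr (snd a) (fst a) (ptr T z)) (ptr T z)"
  proof -
    have ed: "conn (a # T) (fst a) (snd a)" using conn_edge[of "fst a" "snd a" "a # T"] by simp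
    show ?thesis unfolding tr_def using ed conn_sym by auto
  qed
  then show ?case using e ih conn_trans by metis
qed


lemma ptr_dl_out: "desc L \<Longrightarrow> z \<notin> set L \<Longrightarrow> ptr (dl L) z = z"
proof (induction L rule: induct_list012)
  case 1 then show ?case by simp
next
  case (2 x) then show ?case by simp
next
  case (3 x y L)
  have d: "desc (y # L)" "y < x" using 3(3) by (auto simp: desc_Cons)
  then show ?case using 3 ptr_Cons[of "(x,y)" "dl (y # L)"] by (simp add: tr_def)
qed

lemma ptr_dl_next: "desc L \<Longrightarrow> Suc i < length L \<Longrightarrow> ptr (dl L) (L ! i) = L ! Suc i"
proof (induction L arbitrary: i rule: induct_list012)
  case 1 then show ?case by simp
next
  case (2 x) then show ?case by simp
next
  case (3 x y L)
  have d: "desc (y # L)" "y < x" "\<forall>z\<in>set L. z < y" using 3(3) by (auto simp: desc_Cons)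
  have dx: "\<forall>z\<in>set (y # L). z < x" using 3(3) by (auto simp: desc_Cons)
  have pc: "ptr (dl (x # y # L)) = tr y x \<circ> ptr (dl (y # L))" using ptr_Cons[of "(x,y)" "dl (y # L)"] d by simp
  show ?case
  proof (cases i)
    case 0
    have "x \<notin> set (y # L)" using dx by auto
    then have "ptr (dl (y # L)) x = x" using ptr_dl_out[OF d(1)] by blast
    then show ?thesis using pc 0 by (simp add: tr_def)
  next
    case (Suc j)
    have ih: "ptr (dl (y # L)) ((y # L) ! j) = (y # L) ! Suc j" using 3(2)[OF d(1)] 3(4) Suc by simp
    have "(y # L) ! Suc j \<in> set L" using 3(4) Suc by simp
    then have "(y # L) ! Suc j < y" using d by auto
    then show ?thesis using pc ih Suc d by (simp add: tr_def)
  qed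
qed

lemma ptr_dP_out: "(\<forall>C\<in>set P. desc C) \<Longrightarrow> z \<notin> set (concat P) \<Longrightarrow> ptr (dP P) z = z"
proof (induction P)
  case Nil then show ?case by simp
next
  case (Cons C P) then show ?case using ptr_dl_out by (simp add: ptr_app)
qed

lemma ptr_dl_in: "desc L \<Longrightarrow> z \<in> set L \<Longrightarrow> ptr (dl L) z \<in> set L"
proof (induction L rule: induct_list012)
  case 1 then show ?case by simp
next
  case (2 x) then show ?case by simp
next
  case (3 x y L)
  have d: "desc (y # L)" "y < x" using 3(3) by (auto simp: desc_Cons)
  have pc: "ptr (dl (x # y # L)) = tr y x \<circ> ptr (dl (y # L))" using ptr_Cons[of "(x,y)" "dl (y # L)"] d by simp
  show ?case
  proof (cases "z = x")
    case True
    have "x \<notin> set (y # L)" using 3(3) by (auto simp: desc_Cons)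
    then show ?thesis using pc True ptr_dl_out[OF d(1)] by (simp add: tr_def)
  next
    case False
    then have "ptr (dl (y # L)) z \<in> set (y # L)" using 3 d by auto
    then show ?thesis using pc by (auto simp: tr_def)
  qed
qed

lemma ptr_dP_next: "(\<forall>C\<in>set P. desc C) \<Longrightarrow> distinct (concat P) \<Longrightarrow> L \<in> set P \<Longrightarrow> Suc i < length L \<Longrightarrow>
  ptr (dP P) (L ! i) = L ! Suc i"
proof (induction P)
  case Nil then show ?case by simp
next
  case (Cons C P)
  have pc: "ptr (dP (C # P)) = ptr (dl C) \<circ> ptr (dP P)" by (simp add: ptr_app)
  show ?case
  proof (cases "L = C")
    case True
    have "L ! i \<in> set L" using Cons.prems(4) by simp
    then have "L ! i \<notin> set (concat P)" using Cons.prems(2) True by auto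
    then have "ptr (dP P) (L ! i) = L ! i" using ptr_dP_out Cons.prems(1) by simp
    then show ?thesis using pc True ptr_dl_next Cons.prems by simp
  next
    case False
    then have LP: "L \<in> set P" using Cons.prems by simp
    have ih: "ptr (dP P) (L ! i) = L ! Suc i" using Cons LP by simp
    have "L ! Suc i \<in> set L" using Cons.prems(4) by simp
    then have "L ! Suc i \<in> set (concat P)" using LP by auto
    then have "L ! Suc i \<notin> set C" using Cons.prems(2) by auto
    then show ?thesis using pc ih ptr_dl_out Cons.prems(1) by simp
  qed
qed

lemma oldL: "NC n (P1 @ L # P2) \<Longrightarrow> C \<in> set P1 \<or> C \<in> set P2 \<Longrightarrow> C \<noteq> L"
proof
  assume N: "NC n (P1 @ L # P2)" and c: "C \<in> set P1 \<or> C \<in> set P2" and e: "C = L"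
  have dist0: "distinct (concat P1 @ L @ concat P2)" using N unfolding NC_def by simp
  have dL: "L \<noteq> []" using NC_desc[OF N] by simp
  have x: "hd L \<in> set L" using dL by simp
  have "L \<in> set P1 \<or> L \<in> set P2" using c e by simp
  then show False
  proof
    assume "L \<in> set P1"
    then have "hd L \<in> set (concat P1)" using x unfolding set_concat by blast
    moreover have "hd L \<in> set (L @ concat P2)" using x by simp
    ultimately show False using dis_app[OF dist0] by blast
  next
    assume "L \<in> set P2"
    then have "hd L \<in> set (concat P2)" using x unfolding set_concat by blast
    moreover have "hd L \<in> set (concat P1 @ L)" using x by simp
    moreover have "distinct ((concat P1 @ L) @ concat P2)" using dist0 by simp
    ultimately show False using dis_app[of "concat P1 @ L" "concat P2" "hd L"] by blast
  qed
qed

lemma NO: "NC n (P1 @ L # P2) \<Longrightarrow> t \<in> set L \<Longrightarrow> s \<in> set L \<Longrightarrow> s < t \<Longrightarrow>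
  within x (split_at (t,s) P1 L P2) \<Longrightarrow> \<not> obstructing n (t,s) x"
proof
  assume N: "NC n (P1 @ L # P2)" and a: "t \<in> set L" "s \<in> set L" "s < t"
    and w: "within x (split_at (t,s) P1 L P2)" and ob: "obstructing n (t,s) x"
  obtain p q where x: "x = (p,q)" by (cases x)
  have o: "inI s t p \<noteq> inI s t q"
    "p = t \<or> p = s \<or> q = t \<or> q = s \<or> (s < q \<and> q < t \<and> t < p) \<or> (q < s \<and> s < p \<and> p < t)"
    using OBS2[of n t s p q] ob x by auto
  obtain C where C: "C \<in> set (split_at (t,s) P1 L P2)" "p \<in> set C" "q \<in> set C"
    using w x unfolding within_def by auto
  show False
  proof (cases "C \<in> set P1 \<or> C \<in> set P2")
    case True
    have CL: "C \<noteq> L" using oldL[OF N True] .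
    have CP: "C \<in> set (P1 @ L # P2)" "L \<in> set (P1 @ L # P2)" using True by auto
    have dj: "set C \<inter> set L = {}" using NC_disj[OF N CP CL] .
    have nc: "\<not> cross (set C) (set L)" "\<not> cross (set L) (set C)" using NC_nc[OF N] CP CL by auto
    have "(s < q \<and> q < t \<and> t < p) \<or> (q < s \<and> s < p \<and> p < t)" using o(2) dj C a by auto
    then show False
    proof
      assume "s < q \<and> q < t \<and> t < p"
      then have "cross (set L) (set C)" unfolding cross_def using a C by blast
      then show False using nc by simp
    next
      assume "q < s \<and> s < p \<and> p < t"
      then have "cross (set C) (set L)" unfolding cross_def using a C by blast
      then show False using nc by simp
    qed
  next
    case False
    then have "C = filter (inI s t) L \<or> C = filter (Not \<circ> inI s t) L" using C unfolding split_at_def by auto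
    then show False using C o(1) by auto
  qed
qed

lemma within_mono: "within x (split_at a P1 L P2) \<Longrightarrow> within x (P1 @ L # P2)"
  unfolding within_def split_at_def by auto


lemma block_conn: "NC n P \<Longrightarrow> (\<forall>x\<in>set T. snd x < fst x) \<Longrightarrow> ptr T = ptr (dP P) \<Longrightarrow>
  C \<in> set P \<Longrightarrow> x \<in> set C \<Longrightarrow> y \<in> set C \<Longrightarrow> conn T x y"
proof -
  assume N: "NC n P" and T: "\<forall>x\<in>set T. snd x < fst x" and pe: "ptr T = ptr (dP P)"
    and C: "C \<in> set P" and x: "x \<in> set C" and y: "y \<in> set C"
  have dsc: "\<forall>C\<in>set P. desc C" "distinct (concat P)" using N unfolding NC_def by auto
  have h: "i < length C \<Longrightarrow> conn T (C ! 0) (C ! i)" for i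
  proof (induction i)
    case 0 then show ?case by simp
  next
    case (Suc i)
    have "ptr T (C ! i) = C ! Suc i" using pe ptr_dP_next[OF dsc C Suc.prems] by simp
    then have "conn T (C ! Suc i) (C ! i)" using PC[OF T, of "C ! i"] by simp
    moreover have "conn T (C ! 0) (C ! i)" using Suc.IH Suc.prems by simp
    ultimately show ?case using conn_trans[OF _ conn_sym] by blast
  qed
  obtain i j where ij: "i < length C" "x = C ! i" "j < length C" "y = C ! j" using x y by (auto simp: in_set_conv_nth)
  show ?thesis using conn_trans[OF conn_sym[OF h[OF ij(1)]] h[OF ij(3)]] ij by simp
qed

lemma NEC: "NC n P \<Longrightarrow> length P + length T = n \<Longrightarrow> (\<forall>x\<in>set T. snd x < fst x \<and> 1 \<le> snd x \<and> fst x \<le> n) \<Longrightarrow>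
  ptr T = ptr (dP P) \<Longrightarrow> ofree n T \<and> (\<forall>x\<in>set T. within x P)"
proof (induction T arbitrary: P)
  case Nil then show ?case by simp
next
  case (Cons a T)
  obtain t s where a: "a = (t,s)" by (cases a)
  have st: "s < t" "1 \<le> s" "t \<le> n" using Cons.prems(3) a by auto
  have N: "NC n P" using Cons.prems(1) .
  have T1: "\<forall>x\<in>set (a # T). snd x < fst x" using Cons.prems(3) by auto
  have cov: "set (concat P) = {1..n}" using N unfolding NC_def by simp
  have wa: "within (t,s) P"
  proof (rule ccontr)
    assume nw: "\<not> within (t,s) P"
    have "t \<in> set (concat P)" "s \<in> set (concat P)" using cov st by auto
    then obtain L L' where L: "L \<in> set P" "t \<in> set L" and L': "L' \<in> set P" "s \<in> set L'"
      unfolding set_concat by blast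
    have LL: "L \<noteq> L'" using nw L L' unfolding within_def by auto
    obtain S where S: "S \<subseteq> {1..n}" "card {1..n} \<le> card S + length (a # T)"
      "\<forall>x\<in>S. \<forall>y\<in>S. conn (a # T) x y \<longrightarrow> x = y" using IS[of "{1..n}" "a # T"] by auto
    have cS: "length P \<le> card S" using S(2) Cons.prems(2) by simp
    define f where "f x = (SOME C. C \<in> set P \<and> x \<in> set C)" for x
    have f: "x \<in> S \<Longrightarrow> f x \<in> set P \<and> x \<in> set (f x)" for x
    proof -
      assume "x \<in> S"
      then have "\<exists>C. C \<in> set P \<and> x \<in> set C" using S(1) cov by auto
      then show ?thesis unfolding f_def by (rule someI_ex)
    qed
    have pe: "ptr (a # T) = ptr (dP P)" using Cons.prems(4) .
    have bc: "C \<in> set P \<Longrightarrow> x \<in> set C \<Longrightarrow> y \<in> set C \<Longrightarrow> conn (a # T) x y" for C x y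
      using block_conn[OF N T1 pe] by blast
    have inj: "inj_on f S"
    proof (rule inj_onI)
      fix x y assume x: "x \<in> S" and y: "y \<in> S" and e: "f x = f y"
      have "conn (a # T) x y" using bc[of "f x" x y] f[OF x] f[OF y] e by auto
      then show "x = y" using S(3) x y by auto
    qed
    have miss: "L \<notin> f ` S \<or> L' \<notin> f ` S"
    proof (rule ccontr)
      assume "\<not> (L \<notin> f ` S \<or> L' \<notin> f ` S)"
      then obtain x y where x: "x \<in> S" "f x = L" and y: "y \<in> S" "f y = L'" by auto
      have c1: "conn (a # T) x t" using bc[OF L(1)] f[OF x(1)] x(2) L(2) by auto
      have c2: "conn (a # T) t s" using conn_edge[of t s "a # T"] a by simp
      have c3: "conn (a # T) s y" using bc[OF L'(1)] f[OF y(1)] y(2) L'(2) by auto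
      have "x = y" using S(3) x(1) y(1) conn_trans[OF conn_trans[OF c1 c2] c3] by blast
      then show False using x y LL by auto
    qed
    have fin: "finite (set P)" by simp
    have sub: "f ` S \<subseteq> set P" using f by blast
    have "card (f ` S) \<le> card (set P) - 1"
    proof (cases "L \<notin> f ` S")
      case True
      then have "f ` S \<subseteq> set P - {L}" using sub by blast
      then have "card (f ` S) \<le> card (set P - {L})" by (rule card_mono[OF finite_Diff[OF fin]])
      then show ?thesis using card_Diff_singleton[OF L(1)] by simp
    next
      case False
      then have "L' \<notin> f ` S" using miss by blast
      then have "f ` S \<subseteq> set P - {L'}" using sub by blast
      then have "card (f ` S) \<le> card (set P - {L'})" by (rule card_mono[OF finite_Diff[OF fin]])
      then show ?thesis using card_Diff_singleton[OF L'(1)] by simp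
    qed
    moreover have "card (f ` S) = card S" using card_image[OF inj] .
    moreover have "card (set P) \<le> length P" by (rule card_length)
    moreover have "card (set P) > 0" using L(1) fin by (auto simp: card_gt_0_iff)
    ultimately show False using cS by linarith
  qed
  obtain L where L: "L \<in> set P" "t \<in> set L" "s \<in> set L" using wa unfolding within_def by auto
  obtain P1 P2 where P: "P = P1 @ L # P2" using split_list[OF L(1)] by blast
  have N0: "NC n (P1 @ L # P2)" using N P by simp
  let ?P' = "split_at (t,s) P1 L P2"
  have N': "NC n ?P'" by (rule NC_split[OF N0 L(2,3) st(1)])
  have bs: "braid_eq n (eval_band (dP P)) (band_word t s @ eval_band (dP ?P'))" using BS[OF N0 L(2,3) st(1)] P by simp
  have "ptr (dP P) = tr s t \<circ> ptr (dP ?P')" using permw_inv[OF bs] permw_bw[OF st(1)] unfolding ptr_def by simp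
  moreover have "ptr (a # T) = tr s t \<circ> ptr T" using ptr_Cons[of a T] a st by simp
  ultimately have "tr s t \<circ> ptr T = tr s t \<circ> ptr (dP ?P')" using Cons.prems(4) by metis
  then have pT: "ptr T = ptr (dP ?P')"
  proof -
    assume E: "tr s t \<circ> ptr T = tr s t \<circ> ptr (dP ?P')"
    show ?thesis
    proof
      fix z
      have "tr s t (tr s t (ptr T z)) = tr s t (tr s t (ptr (dP ?P') z))" using fun_cong[OF E, of z] by simp
      then show "ptr T z = ptr (dP ?P') z" by simp
    qed
  qed
  have lP: "length ?P' + length T = n" using Cons.prems(2) P unfolding split_at_def by simp
  have ih: "ofree n T \<and> (\<forall>x\<in>set T. within x ?P')" using Cons.IH[OF N' lP _ pT] Cons.prems(3) by auto
  have "\<forall>x\<in>set T. \<not> obstructing n a x" using NO[OF N0 L(2,3) st(1)] ih a by auto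
  moreover have "\<forall>x\<in>set (a # T). within x P" using ih within_mono wa a P by auto
  ultimately show ?case using ih by auto
qed


fun es :: "art_word \<Rightarrow> int" where
  "es [] = 0"
| "es (l # w) = (if snd l then 1 else -1) + es w"

lemma es_app[simp]: "es (u @ v) = es u + es v" by (induction u) auto

lemma es_inv: "braid_eq n u v \<Longrightarrow> es u = es v"
  by (induction rule: braid_eq.induct) auto

lemma es_pos: "es (map (\<lambda>i. (i, True)) xs) = int (length xs)" by (induction xs) auto
lemma es_neg: "es (map (\<lambda>i. (i, False)) xs) = - int (length xs)" by (induction xs) auto

lemma es_bw: "es (band_word t s) = 1"
  unfolding band_word_def using es_pos[of "rev [s+1..<t]"] es_neg[of "[s+1..<t]"] by simp

lemma es_eval: "es (eval_band T) = int (length T)"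
  by (induction T) (auto simp: es_bw)

lemma delta_dl: "dl (rev [1..<Suc n]) = delta n"
proof (induction n)
  case 0 then show ?case by (simp add: delta_def)
next
  case (Suc n)
  show ?case
  proof (cases n)
    case 0 then show ?thesis by (simp add: delta_def)
  next
    case (Suc m)
    have r: "rev [1..<Suc (Suc n)] = Suc n # n # rev [1..<n]" using Suc by simp
    have r2: "rev [1..<Suc n] = n # rev [1..<n]" using Suc by simp
    have "delta (Suc n) = (Suc n, n) # delta n"
      unfolding delta_def using Suc by simp
    then show ?thesis using Suc.IH r r2 by simp
  qed
qed

lemma NC0: "1 \<le> n \<Longrightarrow> NC n [rev [1..<Suc n]]"
  unfolding NC_def desc_def by (auto simp: sorted_wrt_rev)

lemma main: "positive_word n A \<Longrightarrow> canonical_factor n A \<longleftrightarrow> ofree n A"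
proof -
  assume pw: "positive_word n A"
  have Ab: "\<forall>x\<in>set A. snd x < fst x \<and> 1 \<le> snd x \<and> fst x \<le> n"
    using pw unfolding positive_word_def band_gens_def by auto
  show ?thesis
  proof
    assume cf: "canonical_factor n A"
    show "ofree n A"
    proof (cases "A = []")
      case True then show ?thesis by simp
    next
      case False
      then obtain x where "x \<in> set A" by (cases A) auto
      then have n1: "1 \<le> n" using Ab by fastforce
      obtain P1 P2 where P: "positive_word n P1" "positive_word n P2"
        "braid_eq n (eval_band (delta n)) (eval_band P1 @ eval_band A @ eval_band P2)"
        using cf unfolding canonical_factor_def braid_le_def by blast
      let ?T = "P1 @ A @ P2"
      have bT: "braid_eq n (eval_band (delta n)) (eval_band ?T)" using P(3) by simp
      have "int (length (delta n)) = int (length ?T)" using es_inv[OF bT] es_eval by metis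
      then have lT: "length ?T = n - 1" by (simp add: delta_def)
      let ?P0 = "[rev [1..<Suc n]]"
      have N: "NC n ?P0" using NC0[OF n1] .
      have dP0: "dP ?P0 = delta n" using delta_dl by simp
      have l: "length ?P0 + length ?T = n" using lT n1 by simp
      have Tb: "\<forall>x\<in>set ?T. snd x < fst x \<and> 1 \<le> snd x \<and> fst x \<le> n"
        using P(1,2) pw unfolding positive_word_def band_gens_def by auto
      have pe: "ptr ?T = ptr (dP ?P0)" using permw_inv[OF bT] dP0 unfolding ptr_def by simp
      have "ofree n ?T" using NEC[OF N l Tb pe] by blast
      then show ?thesis using ofree_app ofree_app2 by blast
    qed
  next
    assume of: "ofree n A"
    have c1: "braid_le n [] (eval_band A)"
      unfolding braid_le_def using pw
      by (intro exI[of _ A] exI[of _ "[]"]) (auto simp: positive_word_def braid_eq.refl)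
    have c2: "braid_le n (eval_band A) (eval_band (delta n))"
    proof (cases "n = 0")
      case True
      then have "A = []" using Ab by (cases A) auto
      then show ?thesis unfolding braid_le_def using True
        by (intro exI[of _ "[]"]) (auto simp: positive_word_def delta_def braid_eq.refl)
    next
      case False
      then have n1: "1 \<le> n" by simp
      let ?P0 = "[rev [1..<Suc n]]"
      have N: "NC n ?P0" using NC0[OF n1] .
      have dP0: "dP ?P0 = delta n" using delta_dl by simp
      have W: "\<forall>x\<in>set A. within x ?P0 \<and> snd x < fst x"
        using Ab unfolding within_def by auto
      obtain Q where Q: "positive_word n Q" "braid_eq n (eval_band (dP ?P0)) (eval_band A @ eval_band Q)"
        using SUF[OF N W of] by blast
      show ?thesis unfolding braid_le_def
        by (rule exI[of _ "[]"], rule exI[of _ Q]) (use Q dP0 in \<open>auto simp: positive_word_def\<close>)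
    qed
    show "canonical_factor n A" unfolding canonical_factor_def using c1 c2 by blast
  qed
qed

theorem corollary3p6:
  assumes "positive_word n A"
  shows "canonical_factor n A \<longleftrightarrow>
    \<not> (\<exists>B a C b D. A = B @ [a] @ C @ [b] @ D \<and> obstructing n a b)"
  using main[OF assms] ofree_iff by blast

end
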